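(* Let $\mathbb{K}$ be an infinite field of characteristic zero and $\Delta$ a pure $2$-dimensional simplicial complex on vertex set $[n]$. If the facet ideal $\mathcal{F}(\Delta)\subset\mathbb{K}[x_1,\dots,x_n]$ is of linear type, then $A(\Delta)$ has the strong Lefschetz property.
   Context: Let $S=\mathbb{K}[x_1,\dots,x_n]$. For a simplicial complex $\Delta$ on $[n]$, $\mathcal{N}(\Delta)=(x_\tau:\tau\subseteq[n],\ \tau\notin\Delta)$ is the Stanley–Reisner ideal and $\mathcal{F}(\Delta)=(x_F:F\text{ a facet of }\Delta)$ the facet ideal, with $x_\tau=\prod_{j\in\tau}x_j$. $A(\Delta)=S/(\mathcal{N}(\Delta)+(x_1^2,\dots,x_n^2))$. A graded artinian algebra $A$ has the strong Lefschetz property if for a general linear form $L$ all maps $\times L^j:A_i\to A_{i+j}$ have full rank. An ideal $I\subset S$ is of linear type if its Rees algebra $S[It]=\bigoplus_{i\ge0}I^it^i$ is isomorphic to the symmetric algebra of $I$ (equivalently, the defining ideal of $S[It]$ as a quotient of $S[w_1,\dots,w_s]$, $w_k\mapsto g_kt$ for generators $g_k$ of $I$, is generated by polynomials linear in the $w_k$). *)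

theory Defs
  imports "HOL-Library.Poly_Mapping"
begin

text \<open>A polynomial over coefficients 'k in variables indexed by 'v is an element of
  (v =>0 nat) =>0 k (monomial = exponent vector); multiplication is convolution.\<close>

type_synonym ('v, 'k) mpoly = "('v \<Rightarrow>\<^sub>0 nat) \<Rightarrow>\<^sub>0 'k"

definition Var :: "'v \<Rightarrow> ('v, 'k::comm_ring_1) mpoly" where
  "Var v = Poly_Mapping.single (Poly_Mapping.single v 1) 1"

definition Const :: "'k \<Rightarrow> ('v, 'k::comm_ring_1) mpoly" where
  "Const a = Poly_Mapping.single 0 a"

definition sqfree_mon :: "'v set \<Rightarrow> ('v, 'k::comm_ring_1) mpoly" where
  "sqfree_mon \<tau> = (\<Prod>j\<in>\<tau>. Var j)"

definition mdeg :: "('v \<Rightarrow>\<^sub>0 nat) \<Rightarrow> nat" where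
  "mdeg m = (\<Sum>v\<in>Poly_Mapping.keys m. Poly_Mapping.lookup m v)"

definition poly_in :: "'v set \<Rightarrow> ('v, 'k::zero) mpoly \<Rightarrow> bool" where
  "poly_in V p \<longleftrightarrow> (\<forall>m\<in>Poly_Mapping.keys p. Poly_Mapping.keys m \<subseteq> V)"

text \<open>p is homogeneous of degree d (the zero polynomial is homogeneous of every degree)\<close>
definition homog :: "nat \<Rightarrow> ('v, 'k::zero) mpoly \<Rightarrow> bool" where
  "homog d p \<longleftrightarrow> (\<forall>m\<in>Poly_Mapping.keys p. mdeg m = d)"

definition peval :: "('k::zero \<Rightarrow> 'r::comm_semiring_1) \<Rightarrow> ('v \<Rightarrow> 'r) \<Rightarrow> ('v, 'k) mpoly \<Rightarrow> 'r" where
  "peval c h p = (\<Sum>m\<in>Poly_Mapping.keys p. c (Poly_Mapping.lookup p m) * (\<Prod>v\<in>Poly_Mapping.keys m. h v ^ Poly_Mapping.lookup m v))"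

definition ideal_gen_in :: "'a::comm_ring_1 set \<Rightarrow> 'a set \<Rightarrow> 'a set" where
  "ideal_gen_in R G = {x. \<exists>F r. finite F \<and> F \<subseteq> G \<and> (\<forall>g\<in>F. r g \<in> R) \<and> x = (\<Sum>g\<in>F. r g * g)}"

definition simplicial_complex :: "nat \<Rightarrow> nat set set \<Rightarrow> bool" where
  "simplicial_complex n \<Delta> \<longleftrightarrow>
     \<Delta> \<subseteq> Pow {1..n} \<and> {} \<in> \<Delta> \<and> (\<forall>\<sigma>\<in>\<Delta>. \<forall>\<tau>. \<tau> \<subseteq> \<sigma> \<longrightarrow> \<tau> \<in> \<Delta>)
     \<and> (\<forall>i\<in>{1..n}. {i} \<in> \<Delta>)"

definition facets :: "nat set set \<Rightarrow> nat set set" where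
  "facets \<Delta> = {F\<in>\<Delta>. \<forall>G\<in>\<Delta>. F \<subseteq> G \<longrightarrow> G = F}"

definition pure_of_dim :: "nat \<Rightarrow> nat set set \<Rightarrow> bool" where
  "pure_of_dim d \<Delta> \<longleftrightarrow> (\<forall>F\<in>facets \<Delta>. card F = d + 1)"

text \<open>S = K[x_1..x_n], as polynomials in nat-indexed variables involving only x_1..x_n.\<close>
definition Sring :: "nat \<Rightarrow> (nat, 'k::comm_ring_1) mpoly set" where
  "Sring n = {p. poly_in {1..n} p}"

text \<open>Stanley--Reisner ideal N(Delta) + (x_1^2,...,x_n^2) in S; A(Delta) = S / this ideal.\<close>
definition AD_ideal :: "nat \<Rightarrow> nat set set \<Rightarrow> (nat, 'k::comm_ring_1) mpoly set" where
  "AD_ideal n \<Delta> = ideal_gen_in (Sring n)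
      ({sqfree_mon \<tau> | \<tau>. \<tau> \<subseteq> {1..n} \<and> \<tau> \<notin> \<Delta>} \<union> {Var i ^ 2 | i. i \<in> {1..n}})"

text \<open>Multiplication by L^j from A_i to A_(i+j), A = S/I, has full rank, i.e. (finite dimensional
  spaces) it is injective or surjective.\<close>
definition mult_full_rank :: "nat \<Rightarrow> (nat, 'k::comm_ring_1) mpoly set \<Rightarrow> (nat, 'k) mpoly \<Rightarrow> nat \<Rightarrow> nat \<Rightarrow> bool" where
  "mult_full_rank n I L i j \<longleftrightarrow>
     (\<forall>f. f \<in> Sring n \<and> homog i f \<and> L ^ j * f \<in> I \<longrightarrow> f \<in> I)
   \<or> (\<forall>g. g \<in> Sring n \<and> homog (i + j) g \<longrightarrow>
          (\<exists>f. f \<in> Sring n \<and> homog i f \<and> g - L ^ j * f \<in> I))"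

definition lin_form :: "nat \<Rightarrow> (nat \<Rightarrow> 'k) \<Rightarrow> (nat, 'k::comm_ring_1) mpoly" where
  "lin_form n c = (\<Sum>i=1..n. Const (c i) * Var i)"

text \<open>Strong Lefschetz property of S/I: for a general linear form L (i.e. all coefficient vectors
  c in a nonempty Zariski open subset of K^n, the complement of the zero set of a nonzero polynomial
  P), all maps x L^j : A_i -> A_(i+j) have full rank.\<close>
definition strong_lefschetz :: "nat \<Rightarrow> (nat, 'k::field) mpoly set \<Rightarrow> bool" where
  "strong_lefschetz n I \<longleftrightarrow>
     (\<exists>P::(nat, 'k) mpoly. P \<in> Sring n \<and> P \<noteq> 0 \<and>
        (\<forall>c. peval (\<lambda>a. a) c P \<noteq> 0 \<longrightarrow> (\<forall>i j. mult_full_rank n I (lin_form n c) i j)))"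

text \<open>Generators of F(Delta): g_F = x_F for the facets F.  Rees presentation
  S[w_F : F facet] -> S[t], x_i |-> x_i, w_F |-> x_F t.  Variables of S[w]: Inl i = x_i,
  Inr F = w_F.  Variables of S[t]: Some i = x_i, None = t.\<close>

definition Sw_ring :: "nat \<Rightarrow> nat set set \<Rightarrow> (nat + nat set, 'k::comm_ring_1) mpoly set" where
  "Sw_ring n \<Delta> = {p. poly_in (Inl ` {1..n} \<union> Inr ` facets \<Delta>) p}"

definition rees_map :: "nat set set \<Rightarrow> (nat + nat set, 'k::comm_ring_1) mpoly \<Rightarrow> (nat option, 'k) mpoly" where
  "rees_map \<Delta> p = peval Const
      (\<lambda>v. case v of Inl i \<Rightarrow> Var (Some i) | Inr F \<Rightarrow> sqfree_mon (Some ` F) * Var None) p"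

definition rees_ideal :: "nat \<Rightarrow> nat set set \<Rightarrow> (nat + nat set, 'k::comm_ring_1) mpoly set" where
  "rees_ideal n \<Delta> = {p \<in> Sw_ring n \<Delta>. rees_map \<Delta> p = 0}"

definition wdeg :: "(nat + nat set \<Rightarrow>\<^sub>0 nat) \<Rightarrow> nat" where
  "wdeg m = (\<Sum>v\<in>Poly_Mapping.keys m. (case v of Inl _ \<Rightarrow> 0 | Inr _ \<Rightarrow> Poly_Mapping.lookup m v))"

definition linear_in_w :: "(nat + nat set, 'k::zero) mpoly \<Rightarrow> bool" where
  "linear_in_w p \<longleftrightarrow> (\<forall>m\<in>Poly_Mapping.keys p. wdeg m = 1)"

definition facet_ideal_linear_type :: "'k::comm_ring_1 itself \<Rightarrow> nat \<Rightarrow> nat set set \<Rightarrow> bool" where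
  "facet_ideal_linear_type _ n \<Delta> \<longleftrightarrow>
     (rees_ideal n \<Delta> :: (nat + nat set, 'k) mpoly set)
       = ideal_gen_in (Sw_ring n \<Delta>) {p \<in> rees_ideal n \<Delta>. linear_in_w p}"

end

theory Submission
  imports Defs "HOL.Rat"
begin

abbreviation "lk \<equiv> Poly_Mapping.lookup"
abbreviation "ks \<equiv> Poly_Mapping.keys"
abbreviation "sg \<equiv> Poly_Mapping.single"

lemma lookup_single_mult_gen:
  "lk (sg k a * p) m = a * (\<Sum>q. lk p q when m = k + q)"
  for p :: "('v \<Rightarrow>\<^sub>0 nat) \<Rightarrow>\<^sub>0 'k::comm_ring_1"
proof -
  have "lk (sg k a * p) m = (\<Sum>l. lk (sg k a) l * (\<Sum>q. lk p q when m = l + q))"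
    by (rule lookup_mult)
  also have "\<dots> = (\<Sum>l. (a * (\<Sum>q. lk p q when m = l + q)) when l = k)"
    by (rule Sum_any.cong) (auto simp: lookup_single when_def)
  also have "\<dots> = a * (\<Sum>q. lk p q when m = k + q)" by simp
  finally show ?thesis .
qed

lemma lookup_single_mult_add:
  "lk (sg k a * p) (k + q) = a * lk p q"
  for p :: "('v \<Rightarrow>\<^sub>0 nat) \<Rightarrow>\<^sub>0 'k::comm_ring_1"
proof -
  have "(\<Sum>q'. lk p q' when k + q = k + q') = (\<Sum>q'. lk p q' when q' = q)"
    by (rule Sum_any.cong) (auto simp: when_def)
  then show ?thesis by (simp add: lookup_single_mult_gen)
qed

lemma lookup_single_mult_nodvd:
  "(\<And>q. m \<noteq> k + q) \<Longrightarrow> lk (sg k a * p) m = 0"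
  for p :: "('v \<Rightarrow>\<^sub>0 nat) \<Rightarrow>\<^sub>0 'k::comm_ring_1"
  by (simp add: lookup_single_mult_gen)

lemma pm_expansion: "p = (\<Sum>m\<in>ks p. sg m (lk p m))"
proof (rule poly_mapping_eqI)
  fix x
  have "lk (\<Sum>m\<in>ks p. sg m (lk p m)) x = (\<Sum>m\<in>ks p. (if m = x then lk p m else 0))"
    by (simp add: lookup_sum lookup_single when_def)
  also have "\<dots> = lk p x"
    by (cases "x \<in> ks p") (auto simp: in_keys_iff)
  finally show "lk p x = lk (\<Sum>m\<in>ks p. sg m (lk p m)) x" by simp
qed

definition ind :: "'v set \<Rightarrow> 'v \<Rightarrow>\<^sub>0 nat" where
  "ind \<sigma> = (\<Sum>j\<in>\<sigma>. sg j 1)"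

lemma lookup_ind: "finite \<sigma> \<Longrightarrow> lk (ind \<sigma>) j = (if j \<in> \<sigma> then 1 else 0)"
  by (simp add: ind_def lookup_sum lookup_single when_def)

lemma keys_ind: "finite \<sigma> \<Longrightarrow> ks (ind \<sigma>) = \<sigma>"
  by (auto simp: in_keys_iff lookup_ind split: if_splits)

lemma ind_insert: "finite \<sigma> \<Longrightarrow> j \<notin> \<sigma> \<Longrightarrow> ind (insert j \<sigma>) = sg j 1 + ind \<sigma>"
  by (simp add: ind_def)

lemma ind_remove: "finite \<sigma> \<Longrightarrow> j \<in> \<sigma> \<Longrightarrow> ind \<sigma> = sg j 1 + ind (\<sigma> - {j})"
  by (metis Diff_iff finite_Diff ind_insert insert_Diff singletonI)

lemma ind_inj: "finite \<sigma> \<Longrightarrow> finite \<tau> \<Longrightarrow> ind \<sigma> = ind \<tau> \<Longrightarrow> \<sigma> = \<tau>"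
  by (metis keys_ind)

lemma sqfree_mon_eq: "(sqfree_mon \<sigma> :: ('v,'k::comm_ring_1) mpoly) = sg (ind \<sigma>) 1"
proof (cases "finite \<sigma>")
  case True
  then show ?thesis
  proof (induction rule: finite_induct)
    case empty
    then show ?case by (simp add: sqfree_mon_def ind_def one_poly_mapping.abs_eq single.abs_eq)
  next
    case (insert x F)
    then show ?case
      by (simp add: sqfree_mon_def ind_def Var_def mult_single)
  qed
next
  case False
  then show ?thesis by (simp add: sqfree_mon_def ind_def one_poly_mapping.abs_eq single.abs_eq)
qed

lemma Const_mult_Var: "Const a * Var i = (sg (sg i 1) a :: ('v,'k::comm_ring_1) mpoly)"
  by (simp add: Const_def Var_def mult_single)

lemma Var_sq: "(Var i ^ 2 :: ('v,'k::comm_ring_1) mpoly) = sg (sg i 2) 1"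
  by (simp add: Var_def power2_eq_square mult_single single_add[symmetric] numeral_2_eq_2)

definition sqc :: "('v,'k::comm_ring_1) mpoly \<Rightarrow> 'v set \<Rightarrow> 'k" where
  "sqc p \<sigma> = lk p (ind \<sigma>)"

lemma sqc_lin_form:
  assumes "finite \<tau>" "\<tau> \<subseteq> {1..n}"
  shows "sqc (lin_form n c * p) \<tau> = (\<Sum>v\<in>\<tau>. c v * sqc p (\<tau> - {v}))"
proof -
  have "lin_form n c * p = (\<Sum>i=1..n. sg (sg i 1) (c i) * p)"
    by (simp add: lin_form_def sum_distrib_right Const_mult_Var)
  then have "sqc (lin_form n c * p) \<tau> = (\<Sum>i=1..n. lk (sg (sg i 1) (c i) * p) (ind \<tau>))"
    by (simp add: sqc_def lookup_sum)
  also have "\<dots> = (\<Sum>i=1..n. if i \<in> \<tau> then c i * sqc p (\<tau> - {i}) else 0)"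
  proof (rule sum.cong)
    fix i assume "i \<in> {1..n}"
    show "lk (sg (sg i 1) (c i) * p) (ind \<tau>) = (if i \<in> \<tau> then c i * sqc p (\<tau> - {i}) else 0)"
    proof (cases "i \<in> \<tau>")
      case True
      then show ?thesis using assms ind_remove[of \<tau> i]
        by (simp add: lookup_single_mult_add sqc_def)
    next
      case False
      have "ind \<tau> \<noteq> sg i 1 + q" for q
      proof
        assume "ind \<tau> = sg i 1 + q"
        then have "lk (ind \<tau>) i = lk (sg i 1 + q) i" by simp
        then show False using False assms by (simp add: lookup_ind lookup_add)
      qed
      then show ?thesis using False by (simp add: lookup_single_mult_nodvd)
    qed
  qed simp
  also have "\<dots> = (\<Sum>i\<in>\<tau>. c i * sqc p (\<tau> - {i}))"
    using assms by (simp add: sum.If_cases Int_absorb1)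
  finally show ?thesis .
qed



definition cprod :: "(nat \<Rightarrow> 'k::comm_ring_1) \<Rightarrow> nat set \<Rightarrow> 'k" where
  "cprod c \<sigma> = (\<Prod>v\<in>\<sigma>. c v)"

lemma double_count:
  fixes \<phi> :: "nat set \<Rightarrow> 'k::comm_ring_1"
  assumes "finite \<tau>" "card \<tau> = i + Suc j"
  shows "(\<Sum>v\<in>\<tau>. \<Sum>\<sigma>\<in>{\<sigma>. \<sigma> \<subseteq> \<tau> - {v} \<and> card \<sigma> = i}. \<phi> \<sigma>)
       = of_nat (Suc j) * (\<Sum>\<sigma>\<in>{\<sigma>. \<sigma> \<subseteq> \<tau> \<and> card \<sigma> = i}. \<phi> \<sigma>)"
proof -
  let ?S = "{\<sigma>. \<sigma> \<subseteq> \<tau> \<and> card \<sigma> = i}"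
  have finS: "finite ?S" using assms(1) by (auto intro: finite_subset[of _ "Pow \<tau>"])
  have "(\<Sum>v\<in>\<tau>. \<Sum>\<sigma>\<in>{\<sigma>. \<sigma> \<subseteq> \<tau> - {v} \<and> card \<sigma> = i}. \<phi> \<sigma>)
      = (\<Sum>v\<in>\<tau>. \<Sum>\<sigma>\<in>?S. if v \<notin> \<sigma> then \<phi> \<sigma> else 0)"
  proof (rule sum.cong[OF refl])
    fix v assume "v \<in> \<tau>"
    have "{\<sigma>. \<sigma> \<subseteq> \<tau> - {v} \<and> card \<sigma> = i} = {\<sigma>\<in>?S. v \<notin> \<sigma>}" by auto
    then show "(\<Sum>\<sigma>\<in>{\<sigma>. \<sigma> \<subseteq> \<tau> - {v} \<and> card \<sigma> = i}. \<phi> \<sigma>) = (\<Sum>\<sigma>\<in>?S. if v \<notin> \<sigma> then \<phi> \<sigma> else 0)"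
      using sum.inter_filter[OF finS, of \<phi> "\<lambda>\<sigma>. v \<notin> \<sigma>"] by (simp only:)
  qed
  also have "\<dots> = (\<Sum>\<sigma>\<in>?S. \<Sum>v\<in>\<tau>. if v \<notin> \<sigma> then \<phi> \<sigma> else 0)"
    by (rule sum.swap)
  also have "\<dots> = (\<Sum>\<sigma>\<in>?S. of_nat (Suc j) * \<phi> \<sigma>)"
  proof (rule sum.cong[OF refl])
    fix \<sigma> assume s: "\<sigma> \<in> ?S"
    have "(\<Sum>v\<in>\<tau>. if v \<notin> \<sigma> then \<phi> \<sigma> else 0) = (\<Sum>v\<in>\<tau> - \<sigma>. \<phi> \<sigma>)"
      using sum.inter_filter[OF assms(1), of "\<lambda>_. \<phi> \<sigma>" "\<lambda>v. v \<notin> \<sigma>"] by (simp add: set_diff_eq)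
    also have "\<dots> = of_nat (card (\<tau> - \<sigma>)) * \<phi> \<sigma>" by simp
    also have "card (\<tau> - \<sigma>) = Suc j"
      using s assms card_Diff_subset[of \<sigma> \<tau>] finite_subset[of \<sigma> \<tau>] by simp
    finally show "(\<Sum>v\<in>\<tau>. if v \<notin> \<sigma> then \<phi> \<sigma> else 0) = of_nat (Suc j) * \<phi> \<sigma>" .
  qed
  also have "\<dots> = of_nat (Suc j) * (\<Sum>\<sigma>\<in>?S. \<phi> \<sigma>)"
    by (simp add: sum_distrib_left)
  finally show ?thesis .
qed

lemma sqc_Lpow:
  fixes f :: "(nat,'k::field_char_0) mpoly"
  assumes hf: "\<And>\<sigma>. finite \<sigma> \<Longrightarrow> \<sigma> \<subseteq> {1..n} \<Longrightarrow>
      sqc f \<sigma> = (if card \<sigma> = i then cprod c \<sigma> * \<phi> \<sigma> else 0)"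
  shows "finite \<tau> \<Longrightarrow> \<tau> \<subseteq> {1..n} \<Longrightarrow> sqc (lin_form n c ^ j * f) \<tau> =
     (if card \<tau> = i + j then fact j * cprod c \<tau> * (\<Sum>\<sigma>\<in>{\<sigma>. \<sigma> \<subseteq> \<tau> \<and> card \<sigma> = i}. \<phi> \<sigma>) else 0)"
proof (induction j arbitrary: \<tau>)
  case 0
  have "{\<sigma>. \<sigma> \<subseteq> \<tau> \<and> card \<sigma> = card \<tau>} = {\<tau>}"
  proof
    show "{\<sigma>. \<sigma> \<subseteq> \<tau> \<and> card \<sigma> = card \<tau>} \<subseteq> {\<tau>}"
      using 0 card_subset_eq by blast
  qed (use 0 in auto)
  then show ?case using 0 hf by auto
next
  case (Suc j)
  have "sqc (lin_form n c ^ Suc j * f) \<tau> = sqc (lin_form n c * (lin_form n c ^ j * f)) \<tau>"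
    by (simp add: mult.assoc)
  also have "\<dots> = (\<Sum>v\<in>\<tau>. c v * sqc (lin_form n c ^ j * f) (\<tau> - {v}))"
    using Suc.prems by (rule sqc_lin_form)
  also have "\<dots> = (\<Sum>v\<in>\<tau>. c v * (if card (\<tau> - {v}) = i + j then fact j * cprod c (\<tau> - {v}) *
         (\<Sum>\<sigma>\<in>{\<sigma>. \<sigma> \<subseteq> \<tau> - {v} \<and> card \<sigma> = i}. \<phi> \<sigma>) else 0))"
  proof (rule sum.cong[OF refl])
    fix v assume "v \<in> \<tau>"
    have a: "finite (\<tau> - {v})" "\<tau> - {v} \<subseteq> {1..n}" using Suc.prems by auto
    show "c v * sqc (lin_form n c ^ j * f) (\<tau> - {v}) = c v * (if card (\<tau> - {v}) = i + j then fact j * cprod c (\<tau> - {v}) *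
         (\<Sum>\<sigma>\<in>{\<sigma>. \<sigma> \<subseteq> \<tau> - {v} \<and> card \<sigma> = i}. \<phi> \<sigma>) else 0)"
      by (simp only: Suc.IH[OF a])
  qed
  also have "\<dots> = (if card \<tau> = i + Suc j then fact (Suc j) * cprod c \<tau> *
       (\<Sum>\<sigma>\<in>{\<sigma>. \<sigma> \<subseteq> \<tau> \<and> card \<sigma> = i}. \<phi> \<sigma>) else 0)"
  proof (cases "card \<tau> = i + Suc j")
    case True
    have "(\<Sum>v\<in>\<tau>. c v * (if card (\<tau> - {v}) = i + j then fact j * cprod c (\<tau> - {v}) *
         (\<Sum>\<sigma>\<in>{\<sigma>. \<sigma> \<subseteq> \<tau> - {v} \<and> card \<sigma> = i}. \<phi> \<sigma>) else 0))
       = (\<Sum>v\<in>\<tau>. fact j * cprod c \<tau> * (\<Sum>\<sigma>\<in>{\<sigma>. \<sigma> \<subseteq> \<tau> - {v} \<and> card \<sigma> = i}. \<phi> \<sigma>))"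
    proof (rule sum.cong[OF refl])
      fix v assume v: "v \<in> \<tau>"
      have "card (\<tau> - {v}) = i + j" using True v Suc.prems by simp
      moreover have "c v * cprod c (\<tau> - {v}) = cprod c \<tau>"
        using v Suc.prems by (simp add: cprod_def prod.remove)
      ultimately show "c v * (if card (\<tau> - {v}) = i + j then fact j * cprod c (\<tau> - {v}) *
         (\<Sum>\<sigma>\<in>{\<sigma>. \<sigma> \<subseteq> \<tau> - {v} \<and> card \<sigma> = i}. \<phi> \<sigma>) else 0) =
         fact j * cprod c \<tau> * (\<Sum>\<sigma>\<in>{\<sigma>. \<sigma> \<subseteq> \<tau> - {v} \<and> card \<sigma> = i}. \<phi> \<sigma>)"
      proof -
        have k1: "\<And>S. c v * (fact j * cprod c (\<tau> - {v}) * S) = fact j * (c v * cprod c (\<tau> - {v})) * S"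
          by (simp only: ac_simps)
        have k2: "\<And>S. c v * (fact j * cprod c (\<tau> - {v}) * S) = fact j * cprod c \<tau> * S"
          unfolding k1 \<open>c v * cprod c (\<tau> - {v}) = cprod c \<tau>\<close> by (rule refl)
        show ?thesis using \<open>card (\<tau> - {v}) = i + j\<close> by (simp only: k2 if_True refl)
      qed
    qed
    also have "\<dots> = fact j * cprod c \<tau> * (\<Sum>v\<in>\<tau>. \<Sum>\<sigma>\<in>{\<sigma>. \<sigma> \<subseteq> \<tau> - {v} \<and> card \<sigma> = i}. \<phi> \<sigma>)"
      by (simp add: sum_distrib_left)
    also have "\<dots> = fact j * cprod c \<tau> * (of_nat (Suc j) * (\<Sum>\<sigma>\<in>{\<sigma>. \<sigma> \<subseteq> \<tau> \<and> card \<sigma> = i}. \<phi> \<sigma>))"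
      by (simp only: double_count[OF Suc.prems(1) True])
    also have "\<dots> = fact (Suc j) * cprod c \<tau> * (\<Sum>\<sigma>\<in>{\<sigma>. \<sigma> \<subseteq> \<tau> \<and> card \<sigma> = i}. \<phi> \<sigma>)"
      by (simp add: fact_Suc algebra_simps)
    finally show ?thesis using True by simp
  next
    case False
    have "card (\<tau> - {v}) \<noteq> i + j" if "v \<in> \<tau>" for v
    proof
      assume "card (\<tau> - {v}) = i + j"
      then have "card \<tau> = Suc (i + j)" using that Suc.prems card_Suc_Diff1[of \<tau> v] by simp
      then show False using False by simp
    qed
    then show ?thesis using False by simp
  qed
  finally show ?case .
qed



lemma keys_add_nat: "ks (a + b) = ks a \<union> ks (b :: 'v \<Rightarrow>\<^sub>0 nat)"
  by (auto simp: in_keys_iff lookup_add)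

lemma poly_in_zero[simp]: "poly_in V 0"
  by (simp add: poly_in_def)

lemma poly_in_add: "poly_in V p \<Longrightarrow> poly_in V q \<Longrightarrow> poly_in V (p + q)"
  for p :: "('v,'k::comm_monoid_add) mpoly"
  unfolding poly_in_def
proof
  fix m assume h: "\<forall>m\<in>ks p. ks m \<subseteq> V" "\<forall>m\<in>ks q. ks m \<subseteq> V" and m: "m \<in> ks (p + q)"
  have "m \<in> ks p \<union> ks q" using m keys_add[of p q] by (rule subsetD[rotated])
  then show "ks m \<subseteq> V" using h by (auto simp only: Un_iff)
qed

lemma poly_in_uminus: "poly_in V p \<Longrightarrow> poly_in V (- p)"
  for p :: "('v,'k::ab_group_add) mpoly"
  unfolding poly_in_def by simp

lemma poly_in_diff: "poly_in V p \<Longrightarrow> poly_in V q \<Longrightarrow> poly_in V (p - q)"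
  for p :: "('v,'k::ab_group_add) mpoly"
proof -
  assume a: "poly_in V p" "poly_in V q"
  have "p - q = p + (- q)" by (rule diff_conv_add_uminus)
  then show ?thesis using poly_in_add[OF a(1) poly_in_uminus[OF a(2)]] by (simp only:)
qed

lemma poly_in_mult: "poly_in V p \<Longrightarrow> poly_in V q \<Longrightarrow> poly_in V (p * q)"
  for p :: "('v,'k::comm_ring_1) mpoly"
  unfolding poly_in_def
proof
  fix m assume h: "\<forall>m\<in>ks p. ks m \<subseteq> V" "\<forall>m\<in>ks q. ks m \<subseteq> V" and m: "m \<in> ks (p * q)"
  have "m \<in> {a + b | a b. a \<in> ks p \<and> b \<in> ks q}" using m keys_mult[of p q] by (rule subsetD[rotated])
  then obtain a b where "m = a + b" "a \<in> ks p" "b \<in> ks q" by blast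
  then show "ks m \<subseteq> V" using h by (simp add: keys_add_nat)
qed

lemma poly_in_sum: "(\<And>x. x \<in> A \<Longrightarrow> poly_in V (f x)) \<Longrightarrow> poly_in V (sum f A)"
  for f :: "'a \<Rightarrow> ('v,'k::comm_monoid_add) mpoly"
proof (induction A rule: infinite_finite_induct)
  case (insert x F)
  then show ?case by (simp add: poly_in_add)
qed simp_all

lemma poly_in_prod: "(\<And>x. x \<in> A \<Longrightarrow> poly_in V (f x)) \<Longrightarrow> poly_in V (prod f A :: ('v,'k::comm_ring_1) mpoly)"
proof (induction A rule: infinite_finite_induct)
  case (infinite A)
  then show ?case by (simp add: poly_in_def)
next
  case empty
  then show ?case by (simp add: poly_in_def)
next
  case (insert x F)
  then show ?case by (simp add: poly_in_mult)
qed

lemma poly_in_power: "poly_in V p \<Longrightarrow> poly_in V (p ^ k :: ('v,'k::comm_ring_1) mpoly)"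
proof (induction k)
  case 0
  then show ?case by (simp add: poly_in_def)
next
  case (Suc k)
  then show ?case by (simp add: poly_in_mult)
qed

lemma poly_in_single: "ks m \<subseteq> V \<Longrightarrow> poly_in V (sg m a)"
  by (simp add: poly_in_def)

lemma poly_in_Var: "v \<in> V \<Longrightarrow> poly_in V (Var v :: ('v,'k::comm_ring_1) mpoly)"
  by (simp add: Var_def poly_in_def)

lemma poly_in_Const: "poly_in V (Const a :: ('v,'k::comm_ring_1) mpoly)"
  by (simp add: Const_def poly_in_def)

lemma lin_form_Sring: "lin_form n c \<in> Sring n"
  unfolding lin_form_def Sring_def
  by (rule CollectI, rule poly_in_sum, rule poly_in_mult[OF poly_in_Const poly_in_Var]) simp

lemma ideal_0: "0 \<in> ideal_gen_in R G"
  unfolding ideal_gen_in_def by (rule CollectI, rule exI[of _ "{}"]) auto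

lemma ideal_gen: "r \<in> R \<Longrightarrow> g \<in> G \<Longrightarrow> r * g \<in> ideal_gen_in R G"
  unfolding ideal_gen_in_def by (rule CollectI, rule exI[of _ "{g}"], rule exI[of _ "\<lambda>_. r"]) auto

lemma ideal_add:
  assumes R0: "0 \<in> R" and Radd: "\<And>a b. a \<in> R \<Longrightarrow> b \<in> R \<Longrightarrow> a + b \<in> R"
    and x: "x \<in> ideal_gen_in R G" and y: "y \<in> ideal_gen_in R G"
  shows "x + y \<in> ideal_gen_in R G"
proof -
  obtain F1 r1 where F1: "finite F1" "F1 \<subseteq> G" "\<forall>g\<in>F1. r1 g \<in> R" "x = (\<Sum>g\<in>F1. r1 g * g)"
    using x unfolding ideal_gen_in_def by blast
  obtain F2 r2 where F2: "finite F2" "F2 \<subseteq> G" "\<forall>g\<in>F2. r2 g \<in> R" "y = (\<Sum>g\<in>F2. r2 g * g)"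
    using y unfolding ideal_gen_in_def by blast
  define r where "r g = (if g \<in> F1 then r1 g else 0) + (if g \<in> F2 then r2 g else 0)" for g
  have fu: "finite (F1 \<union> F2)" using F1 F2 by simp
  have "x = (\<Sum>g\<in>F1 \<union> F2. (if g \<in> F1 then r1 g else 0) * g)"
  proof -
    have "(\<Sum>g\<in>F1 \<union> F2. (if g \<in> F1 then r1 g else 0) * g) = (\<Sum>g\<in>F1 \<union> F2. (if g \<in> F1 then r1 g * g else 0))"
      by (rule sum.cong) auto
    also have "\<dots> = (\<Sum>g\<in>{g\<in>F1 \<union> F2. g \<in> F1}. r1 g * g)" by (rule sum.inter_filter[OF fu, symmetric])
    also have "{g\<in>F1 \<union> F2. g \<in> F1} = F1" by blast
    finally show ?thesis using F1 by simp
  qed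
  moreover have "y = (\<Sum>g\<in>F1 \<union> F2. (if g \<in> F2 then r2 g else 0) * g)"
  proof -
    have "(\<Sum>g\<in>F1 \<union> F2. (if g \<in> F2 then r2 g else 0) * g) = (\<Sum>g\<in>F1 \<union> F2. (if g \<in> F2 then r2 g * g else 0))"
      by (rule sum.cong) auto
    also have "\<dots> = (\<Sum>g\<in>{g\<in>F1 \<union> F2. g \<in> F2}. r2 g * g)" by (rule sum.inter_filter[OF fu, symmetric])
    also have "{g\<in>F1 \<union> F2. g \<in> F2} = F2" by blast
    finally show ?thesis using F2 by simp
  qed
  moreover have "(\<Sum>g\<in>F1 \<union> F2. r g * g) = (\<Sum>g\<in>F1 \<union> F2. (if g \<in> F1 then r1 g else 0) * g) + (\<Sum>g\<in>F1 \<union> F2. (if g \<in> F2 then r2 g else 0) * g)"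
    unfolding r_def distrib_right by (rule sum.distrib)
  ultimately have "x + y = (\<Sum>g\<in>F1 \<union> F2. r g * g)"
    by simp
  moreover have "\<forall>g\<in>F1 \<union> F2. r g \<in> R"
    using F1 F2 R0 Radd by (auto simp: r_def)
  ultimately show ?thesis
    unfolding ideal_gen_in_def using F1 F2
    by (intro CollectI exI[of _ "F1 \<union> F2"] exI[of _ r] conjI) auto
qed

lemma ideal_sum:
  assumes R0: "0 \<in> R" and Radd: "\<And>a b. a \<in> R \<Longrightarrow> b \<in> R \<Longrightarrow> a + b \<in> R"
  shows "(\<And>x. x \<in> A \<Longrightarrow> f x \<in> ideal_gen_in R G) \<Longrightarrow> sum f A \<in> ideal_gen_in R G"
proof (induction A rule: infinite_finite_induct)
  case (infinite A)
  then show ?case by (simp add: ideal_0)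
next
  case empty
  then show ?case by (simp add: ideal_0)
next
  case (insert x F)
  then show ?case by (simp add: ideal_add[OF R0 Radd])
qed

lemma Sring_0: "0 \<in> Sring n"
  by (simp add: Sring_def)

lemma Sring_add: "a \<in> Sring n \<Longrightarrow> b \<in> Sring n \<Longrightarrow> a + b \<in> Sring n"
  by (simp add: Sring_def poly_in_add)

subsection \<open>The ideal AD_ideal as a monomial ideal\<close>

definition bad :: "nat set set \<Rightarrow> (nat \<Rightarrow>\<^sub>0 nat) \<Rightarrow> bool" where
  "bad \<Delta> m \<longleftrightarrow> (\<exists>i. 2 \<le> lk m i) \<or> ks m \<notin> \<Delta>"

lemma AD_ideal_bad:
  assumes sc: "simplicial_complex n \<Delta>"
    and p: "p \<in> (AD_ideal n \<Delta> :: (nat,'k::comm_ring_1) mpoly set)" and m: "m \<in> ks p"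
  shows "bad \<Delta> m"
proof -
  have down: "\<And>\<sigma> \<tau>. \<sigma> \<in> \<Delta> \<Longrightarrow> \<tau> \<subseteq> \<sigma> \<Longrightarrow> \<tau> \<in> \<Delta>" using sc unfolding simplicial_complex_def by blast
  let ?G = "{sqfree_mon \<tau> | \<tau>. \<tau> \<subseteq> {1..n} \<and> \<tau> \<notin> \<Delta>} \<union> {Var i ^ 2 | i. i \<in> {1..n}} :: (nat,'k) mpoly set"
  obtain F r where F: "finite F" "F \<subseteq> ?G" "p = (\<Sum>g\<in>F. r g * g)"
    using p unfolding AD_ideal_def ideal_gen_in_def by blast
  then obtain g where g: "g \<in> F" "m \<in> ks (r g * g)"
    using m keys_sum[of "\<lambda>g. r g * g" F] by blast
  then obtain a b where ab: "m = a + b" "b \<in> ks g"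
    using keys_mult by blast
  from g F have "g \<in> ?G" by blast
  then show ?thesis
  proof
    assume "g \<in> {sqfree_mon \<tau> | \<tau>. \<tau> \<subseteq> {1..n} \<and> \<tau> \<notin> \<Delta>}"
    then obtain \<tau> where t: "g = sqfree_mon \<tau>" "\<tau> \<subseteq> {1..n}" "\<tau> \<notin> \<Delta>" by blast
    then have ft: "finite \<tau>" using finite_subset by blast
    have "b = ind \<tau>" using ab t by (simp add: sqfree_mon_eq)
    then have "\<tau> \<subseteq> ks m" using ab ft by (simp add: keys_add_nat keys_ind)
    then show ?thesis using down t unfolding bad_def by blast
  next
    assume "g \<in> {Var i ^ 2 | i. i \<in> {1..n}}"
    then obtain i where "g = Var i ^ 2" by blast
    then have "b = sg i 2" using ab by (simp add: Var_sq)
    then have "2 \<le> lk m i" using ab by (simp add: lookup_add)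
    then show ?thesis unfolding bad_def by blast
  qed
qed

lemma pm_split:
  assumes "\<And>x. lk e x \<le> lk m x"
  shows "m = (m - e) + (e :: 'v \<Rightarrow>\<^sub>0 nat)"
  by (rule poly_mapping_eqI) (simp add: lookup_add lookup_minus assms)

lemma keys_minus_nat: "ks (m - e) \<subseteq> ks (m :: 'v \<Rightarrow>\<^sub>0 nat)"
  by (auto simp: in_keys_iff lookup_minus)

lemma single_bad_in_ideal:
  assumes m: "ks m \<subseteq> {1..n}" and b: "bad \<Delta> m"
  shows "sg m a \<in> (AD_ideal n \<Delta> :: (nat,'k::comm_ring_1) mpoly set)"
proof -
  from b consider (sq) i where "2 \<le> lk m i" | (nf) "ks m \<notin> \<Delta>" unfolding bad_def by blast
  then show ?thesis
  proof cases
    case sq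
    have le: "lk (sg i 2) x \<le> lk m x" for x
      using sq by (cases "i = x") (simp_all add: lookup_single when_def)
    have "i \<in> ks m" using sq by (simp add: in_keys_iff)
    then have im: "i \<in> {1..n}" using m by (rule subsetD[rotated])
    have "sg m a = sg (m - sg i 2) a * (sg (sg i 2) 1 :: (nat,'k) mpoly)"
      using pm_split[OF le] by (simp add: mult_single)
    also have "\<dots> = sg (m - sg i 2) a * Var i ^ 2" by (simp add: Var_sq)
    finally have eq: "sg m a = sg (m - sg i 2) a * Var i ^ 2" .
    have r: "sg (m - sg i 2) a \<in> Sring n"
      unfolding Sring_def using m keys_minus_nat[of m "sg i 2"] by (intro CollectI poly_in_single) (rule subset_trans)
    have g: "Var i ^ 2 \<in> {sqfree_mon \<tau> | \<tau>. \<tau> \<subseteq> {1..n} \<and> \<tau> \<notin> \<Delta>} \<union> {Var i ^ 2 | i. i \<in> {1..n}}"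
      using im by blast
    show ?thesis unfolding AD_ideal_def eq by (rule ideal_gen[OF r g])
  next
    case nf
    have ft: "finite (ks m)" by simp
    have le: "lk (ind (ks m)) x \<le> lk m x" for x
      using ft by (auto simp: lookup_ind in_keys_iff)
    have "sg m a = sg (m - ind (ks m)) a * (sg (ind (ks m)) 1 :: (nat,'k) mpoly)"
      using pm_split[OF le] by (simp add: mult_single)
    also have "\<dots> = sg (m - ind (ks m)) a * sqfree_mon (ks m)" by (simp add: sqfree_mon_eq)
    finally have eq: "sg m a = sg (m - ind (ks m)) a * sqfree_mon (ks m)" .
    have r: "sg (m - ind (ks m)) a \<in> Sring n"
      unfolding Sring_def using m keys_minus_nat[of m "ind (ks m)"] by (intro CollectI poly_in_single) (rule subset_trans)
    have g: "sqfree_mon (ks m) \<in> {sqfree_mon \<tau> | \<tau>. \<tau> \<subseteq> {1..n} \<and> \<tau> \<notin> \<Delta>} \<union> {Var i ^ 2 | i. i \<in> {1..n}}"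
      using nf m by blast
    show ?thesis unfolding AD_ideal_def eq by (rule ideal_gen[OF r g])
  qed
qed

lemma bad_AD_ideal:
  assumes p: "p \<in> Sring n" and b: "\<And>m. m \<in> ks p \<Longrightarrow> bad \<Delta> m"
  shows "p \<in> (AD_ideal n \<Delta> :: (nat,'k::comm_ring_1) mpoly set)"
proof -
  have "(\<Sum>m\<in>ks p. sg m (lk p m)) \<in> (AD_ideal n \<Delta> :: (nat,'k) mpoly set)"
    unfolding AD_ideal_def
  proof (rule ideal_sum[OF Sring_0 Sring_add])
    fix m assume "m \<in> ks p"
    then show "sg m (lk p m) \<in> ideal_gen_in (Sring n) ({sqfree_mon \<tau> | \<tau>. \<tau> \<subseteq> {1..n} \<and> \<tau> \<notin> \<Delta>} \<union> {Var i ^ 2 | i. i \<in> {1..n}})"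
    proof -
      have "ks m \<subseteq> {1..n}" using \<open>m \<in> ks p\<close> p unfolding Sring_def poly_in_def by blast
      moreover have "bad \<Delta> m" using b \<open>m \<in> ks p\<close> by blast
      ultimately have "sg m (lk p m) \<in> (AD_ideal n \<Delta> :: (nat,'k) mpoly set)" by (rule single_bad_in_ideal)
      then show ?thesis unfolding AD_ideal_def .
    qed
  qed
  then show ?thesis using pm_expansion[of p] by simp
qed

lemma AD_iff:
  assumes sc: "simplicial_complex n \<Delta>" and p: "p \<in> Sring n"
  shows "p \<in> (AD_ideal n \<Delta> :: (nat,'k::comm_ring_1) mpoly set) \<longleftrightarrow> (\<forall>\<sigma>\<in>\<Delta>. sqc p \<sigma> = 0)"
proof
  have down: "\<And>\<sigma> \<tau>. \<sigma> \<in> \<Delta> \<Longrightarrow> \<tau> \<subseteq> \<sigma> \<Longrightarrow> \<tau> \<in> \<Delta>" using sc unfolding simplicial_complex_def by blast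
  assume pI: "p \<in> AD_ideal n \<Delta>"
  show "\<forall>\<sigma>\<in>\<Delta>. sqc p \<sigma> = 0"
  proof (rule ballI, rule ccontr)
    fix \<sigma> assume s: "\<sigma> \<in> \<Delta>" and nz: "sqc p \<sigma> \<noteq> 0"
    have "\<sigma> \<subseteq> {1..n}" using s sc unfolding simplicial_complex_def by blast
    then have fs: "finite \<sigma>" by (rule finite_subset) simp
    have "ind \<sigma> \<in> ks p" using nz by (simp add: sqc_def in_keys_iff)
    then have "bad \<Delta> (ind \<sigma>)" using AD_ideal_bad[OF sc pI] by blast
    moreover have "\<not> bad \<Delta> (ind \<sigma>)" using fs s by (simp add: bad_def lookup_ind keys_ind)
    ultimately show False by blast
  qed
next
  assume h: "\<forall>\<sigma>\<in>\<Delta>. sqc p \<sigma> = 0"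
  show "p \<in> AD_ideal n \<Delta>"
  proof (rule bad_AD_ideal[OF p])
    fix m assume m: "m \<in> ks p"
    show "bad \<Delta> m"
    proof (rule ccontr)
      assume "\<not> bad \<Delta> m"
      then have le: "\<And>i. lk m i < 2" and kd: "ks m \<in> \<Delta>" unfolding bad_def using not_le by blast+
      have meq: "m = ind (ks m)"
      proof (rule poly_mapping_eqI)
        fix x show "lk m x = lk (ind (ks m)) x"
        proof (cases "x \<in> ks m")
          case True
          then have "lk m x \<noteq> 0" by (simp add: in_keys_iff)
          then have "lk m x = 1" using le[of x] by linarith
          then show ?thesis using True by (simp add: lookup_ind)
        next
          case False
          then show ?thesis by (simp add: lookup_ind in_keys_iff)
        qed
      qed
      have "sqc p (ks m) = lk p m" unfolding sqc_def using meq[symmetric] by (rule arg_cong)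
      then show False using h kd m by (simp add: in_keys_iff)
    qed
  qed
qed



lemma sc_sub: "simplicial_complex n \<Delta> \<Longrightarrow> \<sigma> \<in> \<Delta> \<Longrightarrow> \<sigma> \<subseteq> {1..n}"
  unfolding simplicial_complex_def by blast

lemma sc_fin: "simplicial_complex n \<Delta> \<Longrightarrow> \<sigma> \<in> \<Delta> \<Longrightarrow> finite \<sigma>"
  using sc_sub finite_subset by (metis finite_atLeastAtMost)

lemma sc_finD: "simplicial_complex n \<Delta> \<Longrightarrow> finite \<Delta>"
  unfolding simplicial_complex_def by (meson finite_Pow_iff finite_atLeastAtMost finite_subset)

lemma sc_down: "simplicial_complex n \<Delta> \<Longrightarrow> \<sigma> \<in> \<Delta> \<Longrightarrow> \<tau> \<subseteq> \<sigma> \<Longrightarrow> \<tau> \<in> \<Delta>"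
  unfolding simplicial_complex_def by blast

lemma sc_vertex: "simplicial_complex n \<Delta> \<Longrightarrow> v \<in> {1..n} \<Longrightarrow> {v} \<in> \<Delta>"
  unfolding simplicial_complex_def by blast

lemma in_facet:
  assumes sc: "simplicial_complex n \<Delta>" and s: "\<sigma> \<in> \<Delta>"
  shows "\<exists>F\<in>facets \<Delta>. \<sigma> \<subseteq> F"
proof -
  let ?A = "{G\<in>\<Delta>. \<sigma> \<subseteq> G}"
  have f: "finite ?A" using sc_finD[OF sc] by simp
  have ne: "?A \<noteq> {}" using s by blast
  have "\<exists>G\<in>?A. \<forall>b\<in>?A. G \<le> b \<longrightarrow> G = b" using finite_has_maximal[OF f ne] .
  then obtain G where G: "G \<in> ?A" "\<forall>b\<in>?A. G \<le> b \<longrightarrow> G = b"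
    by (elim bexE) (intro that)
  have "G \<in> facets \<Delta>" unfolding facets_def
  proof (intro CollectI conjI ballI impI)
    show "G \<in> \<Delta>" using G by blast
    fix H assume "H \<in> \<Delta>" "G \<subseteq> H"
    then show "H = G" using G by blast
  qed
  then show ?thesis using G by blast
qed

lemma facet_card: "pure_of_dim 2 \<Delta> \<Longrightarrow> F \<in> facets \<Delta> \<Longrightarrow> card F = 3"
  unfolding pure_of_dim_def by simp

lemma facet_in: "F \<in> facets \<Delta> \<Longrightarrow> F \<in> \<Delta>"
  unfolding facets_def by blast

lemma face_card_le:
  assumes sc: "simplicial_complex n \<Delta>" and pu: "pure_of_dim 2 \<Delta>" and s: "\<sigma> \<in> \<Delta>"
  shows "card \<sigma> \<le> 3"
proof -
  obtain F where F: "F \<in> facets \<Delta>" "\<sigma> \<subseteq> F" using in_facet[OF sc s] by blast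
  have "finite F" using sc_fin[OF sc facet_in[OF F(1)]] .
  then have "card \<sigma> \<le> card F" using F(2) by (rule card_mono)
  then show ?thesis using facet_card[OF pu F(1)] by simp
qed

lemma card3_facet:
  assumes sc: "simplicial_complex n \<Delta>" and pu: "pure_of_dim 2 \<Delta>" and s: "\<sigma> \<in> \<Delta>" and c: "card \<sigma> = 3"
  shows "\<sigma> \<in> facets \<Delta>"
proof -
  obtain F where F: "F \<in> facets \<Delta>" "\<sigma> \<subseteq> F" using in_facet[OF sc s] by blast
  have "finite F" using sc_fin[OF sc facet_in[OF F(1)]] .
  then have "\<sigma> = F" using card_subset_eq[of F \<sigma>] F(2) facet_card[OF pu F(1)] c by simp
  then show ?thesis using F by simp
qed

lemma exists_face_card:
  assumes sc: "simplicial_complex n \<Delta>" and pu: "pure_of_dim 2 \<Delta>" and k: "k \<le> 3"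
  shows "\<exists>\<tau>\<in>\<Delta>. card \<tau> = k"
proof -
  have "{} \<in> \<Delta>" using sc unfolding simplicial_complex_def by blast
  then obtain F where F: "F \<in> facets \<Delta>" using in_facet[OF sc] by blast
  have "k \<le> card F" using facet_card[OF pu F] k by simp
  then obtain T where T: "T \<subseteq> F" "card T = k" by (rule obtain_subset_with_card_n)
  have "T \<in> \<Delta>" using sc_down[OF sc facet_in[OF F] T(1)] .
  then show ?thesis using T by blast
qed

lemma mdeg_ind: "finite \<sigma> \<Longrightarrow> mdeg (ind \<sigma>) = card \<sigma>"
  by (simp add: mdeg_def keys_ind lookup_ind)

lemma homog_sqc:
  assumes h: "homog d p" and f: "finite \<sigma>" and nz: "sqc p \<sigma> \<noteq> 0"
  shows "card \<sigma> = d"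
proof -
  have "ind \<sigma> \<in> ks p" using nz by (simp add: sqc_def in_keys_iff)
  then have "mdeg (ind \<sigma>) = d" using h unfolding homog_def by blast
  then show ?thesis using f by (simp add: mdeg_ind)
qed

definition mkpoly :: "nat set set \<Rightarrow> (nat set \<Rightarrow> 'k) \<Rightarrow> (nat, 'k::comm_ring_1) mpoly" where
  "mkpoly X a = (\<Sum>\<sigma>\<in>X. sg (ind \<sigma>) (a \<sigma>))"

lemma mkpoly_sqc:
  assumes "finite X" "\<And>\<sigma>. \<sigma> \<in> X \<Longrightarrow> finite \<sigma>" "finite \<tau>"
  shows "sqc (mkpoly X a) \<tau> = (if \<tau> \<in> X then a \<tau> else 0)"
proof -
  have "sqc (mkpoly X a) \<tau> = (\<Sum>\<sigma>\<in>X. if \<sigma> = \<tau> then a \<sigma> else 0)"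
    unfolding sqc_def mkpoly_def lookup_sum
  proof (rule sum.cong[OF refl])
    fix \<sigma> assume "\<sigma> \<in> X"
    then have "finite \<sigma>" using assms(2) by blast
    then have "(ind \<sigma> = ind \<tau>) = (\<sigma> = \<tau>)" using assms(3) ind_inj by blast
    then show "lk (sg (ind \<sigma>) (a \<sigma>)) (ind \<tau>) = (if \<sigma> = \<tau> then a \<sigma> else 0)"
      by (simp add: lookup_single when_def)
  qed
  also have "\<dots> = (if \<tau> \<in> X then a \<tau> else 0)"
    using assms(1) by (simp add: sum.delta)
  finally show ?thesis .
qed

lemma mkpoly_Sring:
  assumes "\<And>\<sigma>. \<sigma> \<in> X \<Longrightarrow> \<sigma> \<subseteq> {1..n}"
  shows "mkpoly X a \<in> Sring n"
  unfolding mkpoly_def Sring_def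
proof (rule CollectI, rule poly_in_sum, rule poly_in_single)
  fix \<sigma> assume s: "\<sigma> \<in> X"
  then have "\<sigma> \<subseteq> {1..n}" by (rule assms)
  moreover then have "finite \<sigma>" using finite_subset by blast
  ultimately show "ks (ind \<sigma>) \<subseteq> {1..n}" by (simp add: keys_ind)
qed

lemma mkpoly_homog:
  assumes "\<And>\<sigma>. \<sigma> \<in> X \<Longrightarrow> finite \<sigma> \<and> card \<sigma> = i"
  shows "homog i (mkpoly X a)"
  unfolding homog_def
proof
  fix m assume "m \<in> ks (mkpoly X a)"
  then have "m \<in> (\<Union>\<sigma>\<in>X. ks (sg (ind \<sigma>) (a \<sigma>)))"
    unfolding mkpoly_def by (rule subsetD[OF keys_sum])
  then obtain \<sigma> where "\<sigma> \<in> X" "m \<in> ks (sg (ind \<sigma>) (a \<sigma>))" by (elim UN_E)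
  then have "m = ind \<sigma>" "finite \<sigma>" "card \<sigma> = i" using assms by (auto split: if_splits)
  then show "mdeg m = i" by (simp add: mdeg_ind)
qed



lemma LA_elim:
  fixes W :: "'y \<Rightarrow> 'x \<Rightarrow> 'k::field_char_0"
  assumes "finite X"
  shows "finite Y \<Longrightarrow> (\<forall>y\<in>Y. \<forall>x\<in>X. W y x \<in> \<rat>) \<Longrightarrow>
    (\<forall>\<psi>. \<exists>\<phi>. \<forall>y\<in>Y. (\<Sum>x\<in>X. W y x * \<phi> x) = \<psi> y) \<or>
    (\<exists>b. (\<forall>y\<in>Y. b y \<in> \<rat>) \<and> (\<exists>y\<in>Y. b y \<noteq> 0) \<and> (\<forall>x\<in>X. (\<Sum>y\<in>Y. b y * W y x) = 0))"
  using assms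
proof (induction X arbitrary: Y W rule: finite_induct)
  case empty
  show ?case
  proof (cases "Y = {}")
    case True
    then show ?thesis by simp
  next
    case False
    then obtain y where "y \<in> Y" by blast
    then have "(\<forall>y\<in>Y. (\<lambda>_. 1::'k) y \<in> \<rat>) \<and> (\<exists>y\<in>Y. (\<lambda>_. 1::'k) y \<noteq> 0) \<and> (\<forall>x\<in>{}. (\<Sum>y\<in>Y. (\<lambda>_. 1::'k) y * W y x) = 0)"
        by (auto simp: Rats_1 intro: exI[of _ y])
    then show ?thesis by (intro disjI2 exI[of _ "\<lambda>_. 1"])
  qed
next
  case (insert x0 X')
  note fY = insert.prems(1) and rat = insert.prems(2)
  show ?case
  proof (cases "\<forall>y\<in>Y. W y x0 = 0")
    case True
    have "(\<forall>\<psi>. \<exists>\<phi>. \<forall>y\<in>Y. (\<Sum>x\<in>X'. W y x * \<phi> x) = \<psi> y) \<or>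
      (\<exists>b. (\<forall>y\<in>Y. b y \<in> \<rat>) \<and> (\<exists>y\<in>Y. b y \<noteq> 0) \<and> (\<forall>x\<in>X'. (\<Sum>y\<in>Y. b y * W y x) = 0))"
      using insert.IH[OF fY] rat by blast
    then show ?thesis
    proof
      assume L: "\<forall>\<psi>. \<exists>\<phi>. \<forall>y\<in>Y. (\<Sum>x\<in>X'. W y x * \<phi> x) = \<psi> y"
      have "\<forall>\<psi>. \<exists>\<phi>. \<forall>y\<in>Y. (\<Sum>x\<in>insert x0 X'. W y x * \<phi> x) = \<psi> y"
      proof
        fix \<psi> obtain \<phi> where "\<forall>y\<in>Y. (\<Sum>x\<in>X'. W y x * \<phi> x) = \<psi> y" using L by blast
        then show "\<exists>\<phi>. \<forall>y\<in>Y. (\<Sum>x\<in>insert x0 X'. W y x * \<phi> x) = \<psi> y"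
          using True insert.hyps by auto
      qed
      then show ?thesis by blast
    next
      assume "\<exists>b. (\<forall>y\<in>Y. b y \<in> \<rat>) \<and> (\<exists>y\<in>Y. b y \<noteq> 0) \<and> (\<forall>x\<in>X'. (\<Sum>y\<in>Y. b y * W y x) = 0)"
      then obtain b where b: "\<forall>y\<in>Y. b y \<in> \<rat>" "\<exists>y\<in>Y. b y \<noteq> 0" "\<forall>x\<in>X'. (\<Sum>y\<in>Y. b y * W y x) = 0"
        by blast
      have "\<forall>x\<in>insert x0 X'. (\<Sum>y\<in>Y. b y * W y x) = 0" using b(3) True by simp
      then show ?thesis using b(1,2) by blast
    qed
  next
    case False
    then obtain y0 where y0: "y0 \<in> Y" "W y0 x0 \<noteq> 0" by blast
    define Y' where "Y' = Y - {y0}"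
    define r where "r y = W y x0 / W y0 x0" for y
    define W' where "W' y x = W y x - r y * W y0 x" for y x
    have fY': "finite Y'" using fY by (simp add: Y'_def)
    have rr: "r y \<in> \<rat>" if "y \<in> Y" for y
      using rat that y0 by (simp add: r_def)
    have ratW': "\<forall>y\<in>Y'. \<forall>x\<in>X'. W' y x \<in> \<rat>"
      using rat rr y0 by (auto simp: W'_def Y'_def)
    have Ysplit: "\<And>g. (\<Sum>y\<in>Y. g y) = g y0 + (\<Sum>y\<in>Y'. g y)"
      using fY y0 by (simp add: Y'_def sum.remove)
    have Xsplit: "\<And>g. (\<Sum>x\<in>insert x0 X'. g x) = g x0 + (\<Sum>x\<in>X'. g x)"
      using insert.hyps by simp
    have "(\<forall>\<psi>. \<exists>\<phi>. \<forall>y\<in>Y'. (\<Sum>x\<in>X'. W' y x * \<phi> x) = \<psi> y) \<or>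
      (\<exists>b. (\<forall>y\<in>Y'. b y \<in> \<rat>) \<and> (\<exists>y\<in>Y'. b y \<noteq> 0) \<and> (\<forall>x\<in>X'. (\<Sum>y\<in>Y'. b y * W' y x) = 0))"
      using insert.IH[OF fY' ratW'] .
    then show ?thesis
    proof
      assume L: "\<forall>\<psi>. \<exists>\<phi>. \<forall>y\<in>Y'. (\<Sum>x\<in>X'. W' y x * \<phi> x) = \<psi> y"
      have "\<forall>\<psi>. \<exists>\<phi>. \<forall>y\<in>Y. (\<Sum>x\<in>insert x0 X'. W y x * \<phi> x) = \<psi> y"
      proof
        fix \<psi>
        have "\<exists>\<phi>'. \<forall>y\<in>Y'. (\<Sum>x\<in>X'. W' y x * \<phi>' x) = \<psi> y - r y * \<psi> y0"
          using spec[OF L, of "\<lambda>y. \<psi> y - r y * \<psi> y0"] by simp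
        then obtain \<phi>' where \<phi>': "\<forall>y\<in>Y'. (\<Sum>x\<in>X'. W' y x * \<phi>' x) = \<psi> y - r y * \<psi> y0"
          by blast
        define S0 where "S0 = (\<Sum>x\<in>X'. W y0 x * \<phi>' x)"
        define \<phi> where "\<phi> = \<phi>'(x0 := (\<psi> y0 - S0) / W y0 x0)"
        have e1: "(\<Sum>x\<in>X'. g x * \<phi> x) = (\<Sum>x\<in>X'. g x * \<phi>' x)" for g
          using insert.hyps by (intro sum.cong) (auto simp: \<phi>_def)
        have phx0: "\<phi> x0 = (\<psi> y0 - S0) / W y0 x0" by (simp add: \<phi>_def)
        have spl: "(\<Sum>x\<in>insert x0 X'. W y x * \<phi> x) = W y x0 * \<phi> x0 + (\<Sum>x\<in>X'. W y x * \<phi>' x)" for y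
          by (simp only: Xsplit e1)
        have "(\<Sum>x\<in>insert x0 X'. W y x * \<phi> x) = \<psi> y" if y: "y \<in> Y" for y
        proof (cases "y = y0")
          case True
          then show ?thesis using y0 by (simp add: spl phx0 S0_def[symmetric])
        next
          case False
          then have yY': "y \<in> Y'" using y by (simp add: Y'_def)
          have "(\<Sum>x\<in>X'. W y x * \<phi>' x) = (\<Sum>x\<in>X'. W' y x * \<phi>' x + r y * (W y0 x * \<phi>' x))"
            by (intro sum.cong) (auto simp: W'_def algebra_simps)
          also have "\<dots> = (\<psi> y - r y * \<psi> y0) + r y * S0"
            using \<phi>' yY' by (simp add: sum.distrib sum_distrib_left S0_def)
          finally have s1: "(\<Sum>x\<in>X'. W y x * \<phi>' x) = (\<psi> y - r y * \<psi> y0) + r y * S0" .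
          have s2: "W y x0 * \<phi> x0 = r y * (\<psi> y0 - S0)"
            using y0 by (simp add: phx0 r_def)
          show ?thesis unfolding spl s1 s2 by (simp add: algebra_simps)
        qed
        then show "\<exists>\<phi>. \<forall>y\<in>Y. (\<Sum>x\<in>insert x0 X'. W y x * \<phi> x) = \<psi> y" by blast
      qed
      then show ?thesis by blast
    next
      assume "\<exists>b. (\<forall>y\<in>Y'. b y \<in> \<rat>) \<and> (\<exists>y\<in>Y'. b y \<noteq> 0) \<and> (\<forall>x\<in>X'. (\<Sum>y\<in>Y'. b y * W' y x) = 0)"
      then obtain b' where b': "\<forall>y\<in>Y'. b' y \<in> \<rat>" "\<exists>y\<in>Y'. b' y \<noteq> 0" "\<forall>x\<in>X'. (\<Sum>y\<in>Y'. b' y * W' y x) = 0"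
        by blast
      define T where "T = (\<Sum>y\<in>Y'. b' y * W y x0)"
      define b where "b = b'(y0 := - T / W y0 x0)"
      have e2: "(\<Sum>y\<in>Y'. b y * g y) = (\<Sum>y\<in>Y'. b' y * g y)" for g
        by (intro sum.cong) (auto simp: b_def Y'_def)
      have by0: "b y0 = - T / W y0 x0" by (simp add: b_def)
      have brat: "\<forall>y\<in>Y. b y \<in> \<rat>"
      proof
        fix y assume y: "y \<in> Y"
        show "b y \<in> \<rat>"
        proof (cases "y = y0")
          case True
          have "T \<in> \<rat>" unfolding T_def using b'(1) rat y0
            by (intro Rats_sum Rats_mult) (auto simp: Y'_def)
          then show ?thesis using True rat y0 by (simp add: b_def)
        next
          case False
          then show ?thesis using b'(1) y by (simp add: b_def Y'_def)
        qed
      qed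
      have bnz: "\<exists>y\<in>Y. b y \<noteq> 0"
        using b'(2) by (auto simp: b_def Y'_def)
      have bcol: "\<forall>x\<in>insert x0 X'. (\<Sum>y\<in>Y. b y * W y x) = 0"
      proof
        fix x assume x: "x \<in> insert x0 X'"
        show "(\<Sum>y\<in>Y. b y * W y x) = 0"
        proof (cases "x = x0")
          case True
          show ?thesis unfolding True Ysplit e2 by0 T_def[symmetric] using y0 by simp
        next
          case False
          then have xX: "x \<in> X'" using x by simp
          have "(\<Sum>y\<in>Y'. b' y * W y x) = (\<Sum>y\<in>Y'. b' y * W' y x + (b' y * W y x0) * (W y0 x / W y0 x0))"
            by (intro sum.cong) (auto simp: W'_def r_def algebra_simps)
          also have "\<dots> = (\<Sum>y\<in>Y'. b' y * W' y x) + (\<Sum>y\<in>Y'. b' y * W y x0) * (W y0 x / W y0 x0)"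
            by (simp only: sum.distrib sum_distrib_right)
          also have "\<dots> = T * (W y0 x / W y0 x0)"
            using b'(3) xX by (simp add: T_def)
          finally have "(\<Sum>y\<in>Y'. b' y * W y x) = T * (W y0 x / W y0 x0)" .
          then show ?thesis unfolding Ysplit e2 by0 using y0 by (simp add: algebra_simps)
        qed
      qed
      show ?thesis using brat bnz bcol by blast
    qed
  qed
qed



definition mon :: "('v \<Rightarrow> 'r::comm_semiring_1) \<Rightarrow> ('v \<Rightarrow>\<^sub>0 nat) \<Rightarrow> 'r" where
  "mon h m = (\<Prod>v\<in>ks m. h v ^ lk m v)"

lemma peval_expand:
  assumes c0: "c 0 = 0" and S: "finite S" "ks p \<subseteq> S"
  shows "peval c h p = (\<Sum>m\<in>S. c (lk p m) * mon h m)"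
  unfolding peval_def mon_def
proof (rule sum.mono_neutral_left[OF S(1) S(2)])
  show "\<forall>i\<in>S - ks p. c (lk p i) * (\<Prod>v\<in>ks i. h v ^ lk i v) = 0"
    using c0 by (simp add: in_keys_iff)
qed

definition nsc :: "nat \<Rightarrow> ('a \<Rightarrow>\<^sub>0 nat) \<Rightarrow> ('a \<Rightarrow>\<^sub>0 nat)" where
  "nsc k e = (\<Sum>i<k. e)"

lemma lookup_nsc: "lk (nsc k e) x = k * lk e x"
  by (simp add: nsc_def lookup_sum)

lemma pow_single1: "(sg e (1::'k::comm_ring_1)) ^ k = sg (nsc k e) 1"
proof (induction k)
  case 0
  then show ?case by (simp add: nsc_def one_poly_mapping.abs_eq single.abs_eq)
next
  case (Suc k)
  then show ?case by (simp add: mult_single nsc_def add.commute)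
qed

lemma prod_single1: "(\<Prod>v\<in>S. sg (e v) (1::'k::comm_ring_1)) = sg (\<Sum>v\<in>S. e v) 1"
proof (induction S rule: infinite_finite_induct)
  case (infinite A)
  then show ?case by (simp add: one_poly_mapping.abs_eq single.abs_eq)
next
  case empty
  then show ?case by (simp add: one_poly_mapping.abs_eq single.abs_eq)
next
  case (insert x F)
  then show ?case by (simp add: mult_single)
qed

definition Phi :: "('v \<Rightarrow> ('w \<Rightarrow>\<^sub>0 nat)) \<Rightarrow> ('v \<Rightarrow>\<^sub>0 nat) \<Rightarrow> ('w \<Rightarrow>\<^sub>0 nat)" where
  "Phi \<psi> m = (\<Sum>v\<in>ks m. nsc (lk m v) (\<psi> v))"

lemma mon_single:
  assumes "\<And>v. h v = sg (\<psi> v) (1::'k::comm_ring_1)"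
  shows "mon h m = sg (Phi \<psi> m) 1"
  unfolding mon_def Phi_def assms pow_single1 prod_single1 ..

lemma lookup_Phi:
  assumes "finite S" "ks m \<subseteq> S"
  shows "lk (Phi \<psi> m) x = (\<Sum>v\<in>S. lk m v * lk (\<psi> v) x)"
proof -
  have "lk (Phi \<psi> m) x = (\<Sum>v\<in>ks m. lk m v * lk (\<psi> v) x)"
    by (simp add: Phi_def lookup_sum lookup_nsc)
  also have "\<dots> = (\<Sum>v\<in>S. lk m v * lk (\<psi> v) x)"
    by (rule sum.mono_neutral_left[OF assms]) (simp add: in_keys_iff)
  finally show ?thesis .
qed

definition psiR :: "nat + nat set \<Rightarrow> (nat option \<Rightarrow>\<^sub>0 nat)" where
  "psiR v = (case v of Inl i \<Rightarrow> sg (Some i) 1 | Inr F \<Rightarrow> ind (Some ` F) + sg None 1)"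

definition hR :: "nat + nat set \<Rightarrow> (nat option, 'k::comm_ring_1) mpoly" where
  "hR v = (case v of Inl i \<Rightarrow> Var (Some i) | Inr F \<Rightarrow> sqfree_mon (Some ` F) * Var None)"

lemma hR_single: "hR v = sg (psiR v) (1::'k::comm_ring_1)"
  by (cases v) (simp_all add: hR_def psiR_def Var_def sqfree_mon_eq mult_single)

lemma rees_map_eq: "rees_map \<Delta> p = peval Const hR p"
  unfolding rees_map_def hR_def ..

lemma mon_hR: "mon hR m = sg (Phi psiR m) (1::'k::comm_ring_1)"
  by (rule mon_single) (rule hR_single)


lemma lookup_psiR_Inl_Some: "lk (psiR (Inl i)) (Some j) = (if i = j then 1 else 0)"
  by (simp add: psiR_def lookup_add lookup_single when_def)

lemma lookup_psiR_Inr_Some: "finite F \<Longrightarrow> lk (psiR (Inr F)) (Some j) = (if j \<in> F then 1 else 0)"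
proof -
  assume f: "finite F"
  have "finite (Some ` F)" using f by simp
  then show ?thesis by (simp add: psiR_def lookup_add lookup_single lookup_ind when_def image_iff)
qed

lemma lookup_psiR_Inl_None: "lk (psiR (Inl i)) None = 0"
  by (simp add: psiR_def lookup_single when_def)

lemma lookup_psiR_Inr_None: "finite F \<Longrightarrow> lk (psiR (Inr F)) None = 1"
proof -
  assume f: "finite F"
  have "finite (Some ` F)" using f by simp
  then show ?thesis by (simp add: psiR_def lookup_add lookup_single lookup_ind when_def)
qed

lemma Const_mult_single1: "Const a * sg e (1::'k::comm_ring_1) = sg e a"
  by (simp add: Const_def mult_single)



lemma sum_eq_1_nat:
  assumes "finite A" "\<forall>a\<in>A. 0 < f a" "sum f A = (1::nat)"
  shows "\<exists>a. A = {a} \<and> f a = 1"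
proof -
  have "A \<noteq> {}" using assms(3) by auto
  then obtain a where a: "a \<in> A" by blast
  have s: "sum f A = f a + sum f (A - {a})" using assms(1) a by (simp add: sum.remove)
  have "0 < f a" using assms(2) a by blast
  then have fa: "f a = 1" and r: "sum f (A - {a}) = 0" using s assms(3) by linarith+
  have "A - {a} = {}"
  proof (rule ccontr)
    assume "A - {a} \<noteq> {}"
    then obtain b where "b \<in> A - {a}" by blast
    then have "0 < sum f (A - {a})" using assms(1,2)
      by (meson DiffD1 finite_Diff sum_pos2 order_refl less_imp_le)
    then show False using r by simp
  qed
  then have "A = {a}" using a by blast
  then show ?thesis using fa by blast
qed

lemma wdeg_one:
  assumes w: "wdeg m = 1"
  shows "\<exists>F. Inr F \<in> ks m \<and> lk m (Inr F) = 1 \<and> (\<forall>G. G \<noteq> F \<longrightarrow> lk m (Inr G) = 0)"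
proof -
  let ?f = "\<lambda>v. (case v of Inl _ \<Rightarrow> 0 | Inr _ \<Rightarrow> lk m v)"
  let ?A = "{v\<in>ks m. ?f v \<noteq> 0}"
  have fin: "finite (ks m)" by simp
  have "wdeg m = sum ?f ?A"
    unfolding wdeg_def by (rule sum.mono_neutral_right[OF fin]) auto
  then have s1: "sum ?f ?A = 1" using w by simp
  have "\<exists>a. ?A = {a} \<and> ?f a = 1"
    by (rule sum_eq_1_nat) (use fin s1 in auto)
  then obtain a where a: "?A = {a}" "?f a = 1" by blast
  then have aA: "a \<in> ?A" by blast
  obtain F where aF: "a = Inr F"
    using aA by (cases a) auto
  have "Inr F \<in> ks m" "lk m (Inr F) = 1" using aA a(2) aF by auto
  moreover have "lk m (Inr G) = 0" if "G \<noteq> F" for G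
  proof (rule ccontr)
    assume "lk m (Inr G) \<noteq> 0"
    then have "Inr G \<in> ?A" by (simp add: in_keys_iff)
    then show False using a(1) aF that by blast
  qed
  ultimately show ?thesis by blast
qed

lemma linear_has_Inl:
  fixes g :: "(nat + nat set, 'k::comm_ring_1) mpoly"
  assumes sc: "simplicial_complex n \<Delta>"
    and gR: "g \<in> rees_ideal n \<Delta>" and lin: "linear_in_w g" and m0: "m0 \<in> ks g"
  shows "\<exists>i. Inl i \<in> ks m0"
proof (rule ccontr)
  assume noInl: "\<not> (\<exists>i. Inl i \<in> ks m0)"
  have gS: "poly_in (Inl ` {1..n} \<union> Inr ` facets \<Delta>) g" and g0: "rees_map \<Delta> g = 0"
    using gR unfolding rees_ideal_def Sw_ring_def by auto
  have keysg: "ks m \<subseteq> Inl ` {1..n} \<union> Inr ` facets \<Delta>" if "m \<in> ks g" for m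
    using gS that unfolding poly_in_def by blast
  have wd: "wdeg m = 1" if "m \<in> ks g" for m
    using lin that unfolding linear_in_w_def by blast
  have finF: "finite F" if "F \<in> facets \<Delta>" for F
    using sc_fin[OF sc facet_in[OF that]] .
  obtain F0 where F0: "Inr F0 \<in> ks m0" "lk m0 (Inr F0) = 1" "\<forall>G. G \<noteq> F0 \<longrightarrow> lk m0 (Inr G) = 0"
    using wdeg_one[OF wd[OF m0]] by blast
  have F0f: "F0 \<in> facets \<Delta>" using keysg[OF m0] F0(1) by auto
  have m0eq: "m0 = sg (Inr F0) 1"
  proof (rule poly_mapping_eqI)
    fix x show "lk m0 x = lk (sg (Inr F0) 1) x"
    proof (cases x)
      case (Inl i)
      then show ?thesis using noInl by (auto simp: in_keys_iff lookup_single when_def)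
    next
      case (Inr G)
      then show ?thesis using F0 by (cases "G = F0") (auto simp: lookup_single when_def)
    qed
  qed
  define \<mu>0 where "\<mu>0 = Phi psiR m0"
  have mu0: "lk \<mu>0 x = lk (psiR (Inr F0)) x" for x
    unfolding \<mu>0_def by (subst lookup_Phi[of "{Inr F0}"]) (auto simp: m0eq lookup_single)
  have uniq: "m = m0" if m: "m \<in> ks g" and ph: "Phi psiR m = \<mu>0" for m
  proof -
    obtain F where F: "Inr F \<in> ks m" "lk m (Inr F) = 1" "\<forall>G. G \<noteq> F \<longrightarrow> lk m (Inr G) = 0"
      using wdeg_one[OF wd[OF m]] by blast
    have Ff: "F \<in> facets \<Delta>" using keysg[OF m] F(1) by auto
    have lkPhi: "lk (Phi psiR m) x = (\<Sum>v\<in>ks m. lk m v * lk (psiR v) x)" for x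
      by (rule lookup_Phi) auto
    have "F \<subseteq> F0"
    proof
      fix j assume j: "j \<in> F"
      have "lk m (Inr F) * lk (psiR (Inr F)) (Some j) \<le> (\<Sum>v\<in>ks m. lk m v * lk (psiR v) (Some j))"
        by (rule member_le_sum) (use F(1) in auto)
      then have "1 \<le> lk \<mu>0 (Some j)"
        using F(2) j finF[OF Ff] by (simp add: lookup_psiR_Inr_Some ph[symmetric] lkPhi)
      then show "j \<in> F0" using finF[OF F0f] by (simp add: mu0 lookup_psiR_Inr_Some split: if_splits)
    qed
    then have FF0: "F = F0" using Ff facet_in[OF F0f] unfolding facets_def by blast
    have li: "lk m (Inl i) = 0" for i
    proof (rule ccontr)
      assume nz: "lk m (Inl i) \<noteq> 0"
      then have iK: "Inl i \<in> ks m" by (simp add: in_keys_iff)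
      have "(\<Sum>v\<in>{Inl i, Inr F}. lk m v * lk (psiR v) (Some i)) \<le> (\<Sum>v\<in>ks m. lk m v * lk (psiR v) (Some i))"
        by (rule sum_mono2) (use iK F(1) in auto)
      then have "lk m (Inl i) + (if i \<in> F then 1 else 0) \<le> lk \<mu>0 (Some i)"
        using F(2) finF[OF Ff] by (simp add: lookup_psiR_Inr_Some lookup_psiR_Inl_Some ph[symmetric] lkPhi)
      then show False using nz finF[OF F0f] FF0 by (simp add: mu0 lookup_psiR_Inr_Some split: if_splits)
    qed
    show "m = m0"
    proof (rule poly_mapping_eqI)
      fix x show "lk m x = lk m0 x"
      proof (cases x)
        case (Inl i)
        then show ?thesis using li noInl by (simp add: in_keys_iff)
      next
        case (Inr G)
        then show ?thesis using F F0 FF0 by (cases "G = F0") auto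
      qed
    qed
  qed
  have "rees_map \<Delta> g = (\<Sum>m\<in>ks g. Const (lk g m) * mon hR m)"
    unfolding rees_map_eq by (rule peval_expand) (auto simp: Const_def)
  then have "lk (rees_map \<Delta> g) \<mu>0 = (\<Sum>m\<in>ks g. lk (sg (Phi psiR m) (lk g m)) \<mu>0)"
    by (simp add: lookup_sum mon_hR Const_mult_single1)
  also have "\<dots> = (\<Sum>m\<in>ks g. if m = m0 then lk g m else 0)"
  proof (rule sum.cong[OF refl])
    fix m assume m: "m \<in> ks g"
    show "lk (sg (Phi psiR m) (lk g m)) \<mu>0 = (if m = m0 then lk g m else 0)"
      using uniq[OF m] by (auto simp: lookup_single when_def \<mu>0_def)
  qed
  also have "\<dots> = lk g m0" using m0 by simp
  finally have "lk g m0 = 0" using g0 by simp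
  then show False using m0 by (simp add: in_keys_iff)
qed



lemma J_has_Inl:
  fixes x :: "(nat + nat set, 'k::comm_ring_1) mpoly"
  assumes sc: "simplicial_complex n \<Delta>"
    and x: "x \<in> ideal_gen_in R {p \<in> rees_ideal n \<Delta>. linear_in_w p}" and m: "m \<in> ks x"
  shows "\<exists>i. Inl i \<in> ks m"
proof -
  obtain F r where F: "finite F" "F \<subseteq> {p \<in> rees_ideal n \<Delta>. linear_in_w p}" "x = (\<Sum>g\<in>F. r g * g)"
    using x unfolding ideal_gen_in_def by blast
  have "m \<in> ks (\<Sum>g\<in>F. r g * g)" using m F(3) by simp
  then have "m \<in> (\<Union>g\<in>F. ks (r g * g))" by (rule subsetD[OF keys_sum])
  then obtain g where g: "g \<in> F" "m \<in> ks (r g * g)" by (elim UN_E)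
  have "m \<in> {a + b | a b. a \<in> ks (r g) \<and> b \<in> ks g}" using g(2) keys_mult[of "r g" g] by (rule subsetD[rotated])
  then obtain a b where ab: "m = a + b" "b \<in> ks g" by blast
  have "g \<in> rees_ideal n \<Delta>" "linear_in_w g" using g(1) F(2) by auto
  then obtain i where "Inl i \<in> ks b" using linear_has_Inl[OF sc _ _ ab(2)] by blast
  then have "Inl i \<in> ks m" using ab(1) by (simp add: keys_add_nat)
  then show ?thesis by blast
qed

lemma no_int_balance:
  assumes sc: "simplicial_complex n \<Delta>"
    and lt: "facet_ideal_linear_type TYPE('k::field) n \<Delta>"
    and T0: "T0 \<in> facets \<Delta>" "a T0 \<noteq> 0"
    and bal: "\<And>j. (\<Sum>T\<in>facets \<Delta>. if j \<in> T then a T else 0) = (0::int)"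
    and tot: "(\<Sum>T\<in>facets \<Delta>. a T) = 0"
  shows False
proof -
  define Fs where "Fs = facets \<Delta>"
  have finFs: "finite Fs" unfolding Fs_def using sc_finD[OF sc] by (rule finite_subset[rotated]) (auto simp: facets_def)
  have finT: "finite T" if "T \<in> Fs" for T using sc_fin[OF sc facet_in] that by (simp add: Fs_def)
  define ap where "ap T = nat (a T)" for T
  define am where "am T = nat (- a T)" for T
  have apam: "int (ap T) - int (am T) = a T" for T by (simp add: ap_def am_def)
  define Mp where "Mp = (\<Sum>T\<in>Fs. sg (Inr T) (ap T) :: nat + nat set \<Rightarrow>\<^sub>0 nat)"
  define Mm where "Mm = (\<Sum>T\<in>Fs. sg (Inr T) (am T) :: nat + nat set \<Rightarrow>\<^sub>0 nat)"
  have lkM: "lk (\<Sum>T\<in>Fs. sg (Inr T) (f T) :: nat + nat set \<Rightarrow>\<^sub>0 nat) v =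
      (case v of Inl _ \<Rightarrow> 0 | Inr T \<Rightarrow> if T \<in> Fs then f T else 0)" for f v
    using finFs by (cases v) (auto simp: lookup_sum lookup_single when_def)
  have ksM: "ks (\<Sum>T\<in>Fs. sg (Inr T) (f T) :: nat + nat set \<Rightarrow>\<^sub>0 nat) \<subseteq> Inr ` Fs" for f
  proof
    fix v assume "v \<in> ks (\<Sum>T\<in>Fs. sg (Inr T) (f T) :: nat + nat set \<Rightarrow>\<^sub>0 nat)"
    then have "lk (\<Sum>T\<in>Fs. sg (Inr T) (f T) :: nat + nat set \<Rightarrow>\<^sub>0 nat) v \<noteq> 0" by (simp add: in_keys_iff)
    then show "v \<in> Inr ` Fs" unfolding lkM by (cases v) (auto split: if_splits)
  qed
  have PhiM: "lk (Phi psiR (\<Sum>T\<in>Fs. sg (Inr T) (f T) :: nat + nat set \<Rightarrow>\<^sub>0 nat)) x = (\<Sum>T\<in>Fs. f T * lk (psiR (Inr T)) x)" for f x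
  proof -
    have "lk (Phi psiR (\<Sum>T\<in>Fs. sg (Inr T) (f T) :: nat + nat set \<Rightarrow>\<^sub>0 nat)) x
       = (\<Sum>v\<in>Inr ` Fs. lk (\<Sum>T\<in>Fs. sg (Inr T) (f T) :: nat + nat set \<Rightarrow>\<^sub>0 nat) v * lk (psiR v) x)"
      by (rule lookup_Phi) (use finFs ksM in auto)
    also have "\<dots> = (\<Sum>T\<in>Fs. f T * lk (psiR (Inr T)) x)"
      by (subst sum.reindex) (auto simp: inj_on_def lkM)
    finally show ?thesis .
  qed
  have PhiEq: "Phi psiR Mp = Phi psiR Mm"
  proof (rule poly_mapping_eqI)
    fix x
    show "lk (Phi psiR Mp) x = lk (Phi psiR Mm) x"
    proof (cases x)
      case None
      have "(\<Sum>T\<in>Fs. ap T * lk (psiR (Inr T)) x) = (\<Sum>T\<in>Fs. ap T)"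
        using None finT by (intro sum.cong) (auto simp: lookup_psiR_Inr_None)
      moreover have "(\<Sum>T\<in>Fs. am T * lk (psiR (Inr T)) x) = (\<Sum>T\<in>Fs. am T)"
        using None finT by (intro sum.cong) (auto simp: lookup_psiR_Inr_None)
      moreover have "(\<Sum>T\<in>Fs. ap T) = (\<Sum>T\<in>Fs. am T)"
      proof -
        have "int (\<Sum>T\<in>Fs. ap T) - int (\<Sum>T\<in>Fs. am T) = (\<Sum>T\<in>Fs. a T)"
          by (simp add: apam sum_subtractf[symmetric])
        then have "int (\<Sum>T\<in>Fs. ap T) - int (\<Sum>T\<in>Fs. am T) = 0" using tot by (simp only: Fs_def)
        then show ?thesis by (simp del: of_nat_sum)
      qed
      ultimately show ?thesis by (simp add: Mp_def Mm_def PhiM)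
    next
      case (Some j)
      have "(\<Sum>T\<in>Fs. ap T * lk (psiR (Inr T)) x) = (\<Sum>T\<in>Fs. if j \<in> T then ap T else 0)"
        using Some finT by (intro sum.cong) (auto simp: lookup_psiR_Inr_Some)
      moreover have "(\<Sum>T\<in>Fs. am T * lk (psiR (Inr T)) x) = (\<Sum>T\<in>Fs. if j \<in> T then am T else 0)"
        using Some finT by (intro sum.cong) (auto simp: lookup_psiR_Inr_Some)
      moreover have "(\<Sum>T\<in>Fs. if j \<in> T then ap T else 0) = (\<Sum>T\<in>Fs. if j \<in> T then am T else 0)"
      proof -
        have "int (\<Sum>T\<in>Fs. if j \<in> T then ap T else 0) - int (\<Sum>T\<in>Fs. if j \<in> T then am T else 0)
            = (\<Sum>T\<in>Fs. if j \<in> T then a T else 0)"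
          by (simp add: of_nat_sum sum_subtractf[symmetric] apam[symmetric] if_distrib cong: if_cong)
        then have "int (\<Sum>T\<in>Fs. if j \<in> T then ap T else 0) - int (\<Sum>T\<in>Fs. if j \<in> T then am T else 0) = 0"
          using bal[of j] by (simp only: Fs_def)
        then show ?thesis by (simp del: of_nat_sum)
      qed
      ultimately show ?thesis by (simp add: Mp_def Mm_def PhiM)
    qed
  qed
  have Mne: "Mp \<noteq> Mm"
  proof
    assume "Mp = Mm"
    then have "lk Mp (Inr T0) = lk Mm (Inr T0)" by simp
    moreover have "T0 \<in> Fs" using T0(1) by (simp add: Fs_def)
    ultimately have "ap T0 = am T0" by (simp add: Mp_def Mm_def lkM)
    then show False using T0(2) by (simp add: ap_def am_def)
  qed
  define B where "B = sg Mp (1::'k) - sg Mm 1"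
  have lkB: "lk B Mp = 1" using Mne by (simp add: B_def lookup_minus lookup_single when_def)
  then have MpB: "Mp \<in> ks B" by (simp add: in_keys_iff)
  have ksB: "ks B \<subseteq> {Mp, Mm}"
    by (auto simp: B_def in_keys_iff lookup_minus lookup_single when_def split: if_splits)
  have BSw: "B \<in> Sw_ring n \<Delta>"
    unfolding Sw_ring_def poly_in_def
  proof (intro CollectI ballI)
    fix m assume "m \<in> ks B"
    then have "m = Mp \<or> m = Mm" using ksB by blast
    then have "ks m \<subseteq> Inr ` Fs" using ksM by (auto simp: Mp_def Mm_def)
    then show "ks m \<subseteq> Inl ` {1..n} \<union> Inr ` facets \<Delta>" by (auto simp: Fs_def)
  qed
  have "rees_map \<Delta> B = (\<Sum>m\<in>{Mp, Mm}. Const (lk B m) * mon hR m)"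
    unfolding rees_map_eq by (rule peval_expand) (use ksB in \<open>auto simp: Const_def\<close>)
  also have "\<dots> = Const 1 * sg (Phi psiR Mp) 1 + Const (-1) * sg (Phi psiR Mp) (1::'k)"
    using Mne by (simp add: mon_hR PhiEq B_def lookup_minus lookup_single when_def)
  also have "\<dots> = 0" by (simp add: Const_mult_single1 single_add[symmetric])
  finally have "rees_map \<Delta> B = 0" .
  then have "B \<in> rees_ideal n \<Delta>" using BSw by (simp add: rees_ideal_def)
  then have "B \<in> ideal_gen_in (Sw_ring n \<Delta>) {p \<in> rees_ideal n \<Delta>. linear_in_w p}"
    using lt unfolding facet_ideal_linear_type_def by simp
  then obtain i where "Inl i \<in> ks Mp" using J_has_Inl[OF sc _ MpB] by blast
  then show False using ksM[of ap] by (auto simp: Mp_def)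
qed



lemma common_denom:
  fixes q :: "'y \<Rightarrow> rat"
  shows "finite Y \<Longrightarrow> \<exists>D::int. D > 0 \<and> (\<forall>y\<in>Y. q y * of_int D \<in> \<int>)"
proof (induction Y rule: finite_induct)
  case empty
  then show ?case by (intro exI[of _ 1]) simp
next
  case (insert x F)
  then obtain D where D: "D > 0" "\<forall>y\<in>F. q y * of_int D \<in> \<int>" by blast
  obtain nn d where nd: "quotient_of (q x) = (nn, d)" by (cases "quotient_of (q x)")
  have dpos: "d > 0" using quotient_of_denom_pos[OF nd] .
  have qx: "q x = of_int nn / of_int d" using quotient_of_div[OF nd] .
  have eq: "q x * of_int (D * d) = of_int (nn * D)"
    using dpos by (simp add: qx field_simps)
  have "q x * of_int (D * d) \<in> \<int>" unfolding eq by (rule Ints_of_int)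
  moreover have "q y * of_int (D * d) \<in> \<int>" if "y \<in> F" for y
  proof -
    have e2: "q y * of_int (D * d) = (q y * of_int D) * of_int d" by (simp add: algebra_simps)
    have "q y * of_int D \<in> \<int>" using D(2) that by blast
    then show ?thesis unfolding e2 by (rule Ints_mult) (rule Ints_of_int)
  qed
  ultimately show ?case using D(1) dpos by (intro exI[of _ "D * d"]) auto
qed

lemma faces3_eq_facets:
  assumes sc: "simplicial_complex n \<Delta>" and pu: "pure_of_dim 2 \<Delta>"
  shows "{\<tau>\<in>\<Delta>. card \<tau> = 3} = facets \<Delta>"
  using card3_facet[OF sc pu] facet_card[OF pu] facet_in by blast

lemma rat_balance_False:
  fixes b :: "nat set \<Rightarrow> 'k::field_char_0"
  assumes sc: "simplicial_complex n \<Delta>" and pu: "pure_of_dim 2 \<Delta>"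
    and lt: "facet_ideal_linear_type TYPE('k) n \<Delta>"
    and brat: "\<forall>y\<in>{\<tau>\<in>\<Delta>. card \<tau> = 3}. b y \<in> \<rat>"
    and bnz: "\<exists>y\<in>{\<tau>\<in>\<Delta>. card \<tau> = 3}. b y \<noteq> 0"
    and vb: "\<forall>v\<in>{1..n}. (\<Sum>y\<in>{\<tau>\<in>\<Delta>. card \<tau> = 3}. b y * (if {v} \<subseteq> y then 1 else 0)) = 0"
  shows False
proof -
  define Y where "Y = facets \<Delta>"
  have YF: "{\<tau>\<in>\<Delta>. card \<tau> = 3} = Y" unfolding Y_def by (rule faces3_eq_facets[OF sc pu])
  have finY: "finite Y" unfolding Y_def using sc_finD[OF sc] by (rule finite_subset[rotated]) (auto simp: facets_def)
  have Ysub: "y \<subseteq> {1..n}" if "y \<in> Y" for y using sc_sub[OF sc facet_in] that by (simp add: Y_def)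
  have finy: "finite y" if "y \<in> Y" for y using Ysub[OF that] finite_subset by blast
  have cardy: "card y = 3" if "y \<in> Y" for y using facet_card[OF pu] that by (simp add: Y_def)
  define q where "q y = (SOME r. b y = of_rat r)" for y
  have hq: "b y = of_rat (q y)" if "y \<in> Y" for y
  proof -
    have "b y \<in> \<rat>" using brat that YF by blast
    then obtain r where "b y = of_rat r" by (elim Rats_cases)
    then show ?thesis unfolding q_def by (rule someI)
  qed
  have qbal: "(\<Sum>y\<in>Y. if j \<in> y then q y else 0) = 0" for j
  proof (cases "j \<in> {1..n}")
    case True
    have "of_rat (\<Sum>y\<in>Y. if j \<in> y then q y else 0) = (\<Sum>y\<in>Y. b y * (if {j} \<subseteq> y then 1 else 0) :: 'k)"
      unfolding of_rat_sum by (intro sum.cong) (auto simp: hq)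
    also have "\<dots> = 0" using vb True YF by simp
    finally show ?thesis by simp
  next
    case False
    then have "j \<notin> y" if "y \<in> Y" for y using Ysub[OF that] by blast
    then show ?thesis by simp
  qed
  obtain D where D: "D > 0" "\<forall>y\<in>Y. q y * of_int D \<in> \<int>" using common_denom[OF finY] by blast
  define a where "a y = (SOME i. q y * of_int D = of_int i)" for y
  have ha: "of_int (a y) = q y * of_int D" if "y \<in> Y" for y
  proof -
    have "q y * of_int D \<in> \<int>" using D(2) that by blast
    then obtain i where "q y * of_int D = of_int i" by (metis Ints_cases)
    then have "q y * of_int D = of_int (a y)" unfolding a_def by (rule someI)
    then show ?thesis by simp
  qed
  have abal: "(\<Sum>y\<in>Y. if j \<in> y then a y else 0) = 0" for j
  proof -
    have "(of_int (\<Sum>y\<in>Y. if j \<in> y then a y else 0) :: rat) = (\<Sum>y\<in>Y. if j \<in> y then q y else 0) * of_int D"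
      unfolding of_int_sum sum_distrib_right by (intro sum.cong) (auto simp: ha)
    also have "\<dots> = 0" by (simp add: qbal)
    finally have "(of_int (\<Sum>y\<in>Y. if j \<in> y then a y else 0) :: rat) = 0" .
    then show ?thesis by (simp only: of_int_eq_0_iff)
  qed
  have atot: "(\<Sum>y\<in>Y. a y) = 0"
  proof -
    have "3 * (\<Sum>y\<in>Y. a y) = (\<Sum>y\<in>Y. \<Sum>j\<in>{1..n}. if j \<in> y then a y else 0)"
      unfolding sum_distrib_left
    proof (rule sum.cong[OF refl])
      fix y assume y: "y \<in> Y"
      have "(\<Sum>j\<in>{1..n}. if j \<in> y then a y else 0) = (\<Sum>j\<in>{j\<in>{1..n}. j \<in> y}. a y)"
        by (rule sum.inter_filter[symmetric]) simp
      also have "{j\<in>{1..n}. j \<in> y} = y" using Ysub[OF y] by blast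
      finally show "3 * a y = (\<Sum>j\<in>{1..n}. if j \<in> y then a y else 0)" using cardy[OF y] by simp
    qed
    also have "\<dots> = (\<Sum>j\<in>{1..n}. \<Sum>y\<in>Y. if j \<in> y then a y else 0)" by (rule sum.swap)
    also have "\<dots> = 0" by (simp add: abal)
    finally show ?thesis by simp
  qed
  obtain y0 where y0: "y0 \<in> Y" "b y0 \<noteq> 0" using bnz YF by blast
  have "q y0 \<noteq> 0" using y0 hq by fastforce
  then have "(of_int (a y0) :: rat) \<noteq> 0" using ha[OF y0(1)] D(1) by simp
  then have ay0: "a y0 \<noteq> 0" by simp
  show False
    using no_int_balance[OF sc lt, of y0 a] y0(1) ay0 abal atot by (simp add: Y_def)
qed



lemma mdeg_add: "mdeg (a + b) = mdeg a + mdeg (b :: 'v \<Rightarrow>\<^sub>0 nat)"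
proof -
  let ?U = "ks a \<union> ks b"
  have fU: "finite ?U" by simp
  have "mdeg (a + b) = (\<Sum>v\<in>?U. lk (a + b) v)"
    unfolding mdeg_def keys_add_nat ..
  also have "\<dots> = (\<Sum>v\<in>?U. lk a v) + (\<Sum>v\<in>?U. lk b v)"
    by (simp add: lookup_add sum.distrib)
  also have "(\<Sum>v\<in>?U. lk a v) = mdeg a"
    unfolding mdeg_def by (rule sum.mono_neutral_right[OF fU]) (auto simp: in_keys_iff)
  also have "(\<Sum>v\<in>?U. lk b v) = mdeg b"
    unfolding mdeg_def by (rule sum.mono_neutral_right[OF fU]) (auto simp: in_keys_iff)
  finally show ?thesis .
qed

lemma homog_mult:
  fixes p q :: "('v,'k::comm_ring_1) mpoly"
  assumes "homog i p" "homog j q"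
  shows "homog (i + j) (p * q)"
  unfolding homog_def
proof
  fix m assume "m \<in> ks (p * q)"
  then have "m \<in> {a + b | a b. a \<in> ks p \<and> b \<in> ks q}" using keys_mult[of p q] by (rule subsetD[rotated])
  then obtain a b where "m = a + b" "a \<in> ks p" "b \<in> ks q" by blast
  then show "mdeg m = i + j" using assms unfolding homog_def by (simp add: mdeg_add)
qed

lemma homog_lin_form: "homog 1 (lin_form n c :: (nat,'k::comm_ring_1) mpoly)"
  unfolding homog_def
proof
  fix m assume "m \<in> ks (lin_form n c :: (nat,'k) mpoly)"
  then have "m \<in> (\<Union>i\<in>{1..n}. ks (Const (c i) * Var i :: (nat,'k) mpoly))"
    unfolding lin_form_def by (rule subsetD[OF keys_sum])
  then obtain i where "m \<in> ks (Const (c i) * Var i :: (nat,'k) mpoly)" by (elim UN_E)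
  then have "m \<in> ks (sg (sg i 1) (c i) :: (nat,'k) mpoly)" by (simp only: Const_mult_Var)
  then have "m = sg i 1" by (simp split: if_splits)
  then show "mdeg m = 1" by (simp add: mdeg_def)
qed

lemma homog_zero: "homog i 0"
  by (simp add: homog_def)

lemma sqc_diff: "sqc (p - q) \<sigma> = sqc p \<sigma> - sqc q \<sigma>"
  by (simp add: sqc_def lookup_minus)

lemma card0_subsets: "finite \<tau> \<Longrightarrow> {\<sigma>. \<sigma> \<subseteq> \<tau> \<and> card \<sigma> = 0} = {{}}"
proof
  assume f: "finite \<tau>"
  show "{\<sigma>. \<sigma> \<subseteq> \<tau> \<and> card \<sigma> = 0} \<subseteq> {{}}"
  proof
    fix \<sigma> assume "\<sigma> \<in> {\<sigma>. \<sigma> \<subseteq> \<tau> \<and> card \<sigma> = 0}"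
    then have "\<sigma> \<subseteq> \<tau>" "card \<sigma> = 0" by auto
    moreover then have "finite \<sigma>" using f finite_subset by blast
    ultimately show "\<sigma> \<in> {{}}" by simp
  qed
qed simp

lemma card1_subsets2: "x \<noteq> y \<Longrightarrow> {\<sigma>. \<sigma> \<subseteq> {x, y} \<and> card \<sigma> = 1} = {{x}, {y}}"
proof
  assume xy: "x \<noteq> y"
  show "{\<sigma>. \<sigma> \<subseteq> {x, y} \<and> card \<sigma> = 1} \<subseteq> {{x}, {y}}"
  proof
    fix \<sigma> assume "\<sigma> \<in> {\<sigma>. \<sigma> \<subseteq> {x, y} \<and> card \<sigma> = 1}"
    then have s: "\<sigma> \<subseteq> {x, y}" "card \<sigma> = 1" by auto
    then obtain z where z: "\<sigma> = {z}" using card_1_singleton_iff by (metis One_nat_def)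
    then show "\<sigma> \<in> {{x}, {y}}" using s(1) by auto
  qed
qed auto

lemma Lpow_homog:
  fixes f :: "(nat,'k::field_char_0) mpoly"
  assumes cnz: "\<forall>v\<in>{1..n}. c v \<noteq> 0" and hf: "homog i f"
    and \<tau>: "finite \<tau>" "\<tau> \<subseteq> {1..n}"
  shows "sqc (lin_form n c ^ j * f) \<tau> = (if card \<tau> = i + j then fact j * cprod c \<tau> *
     (\<Sum>\<sigma>\<in>{\<sigma>. \<sigma> \<subseteq> \<tau> \<and> card \<sigma> = i}. sqc f \<sigma> / cprod c \<sigma>) else 0)"
proof (rule sqc_Lpow[OF _ \<tau>])
  fix \<sigma> :: "nat set" assume s: "finite \<sigma>" "\<sigma> \<subseteq> {1..n}"
  show "sqc f \<sigma> = (if card \<sigma> = i then cprod c \<sigma> * (sqc f \<sigma> / cprod c \<sigma>) else 0)"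
  proof (cases "card \<sigma> = i")
    case True
    have "cprod c \<sigma> \<noteq> 0" unfolding cprod_def using s cnz by (auto simp: prod_zero_iff)
    then show ?thesis using True by simp
  next
    case False
    then show ?thesis using homog_sqc[OF hf s(1)] by auto
  qed
qed

lemma cprod_nz: "\<forall>v\<in>{1..n}. c v \<noteq> 0 \<Longrightarrow> finite \<tau> \<Longrightarrow> \<tau> \<subseteq> {1..n} \<Longrightarrow> cprod c \<tau> \<noteq> (0::'k::field)"
  unfolding cprod_def by (auto simp: prod_zero_iff)



lemma Lpow_Sring: "f \<in> Sring n \<Longrightarrow> lin_form n c ^ j * f \<in> Sring n"
  using lin_form_Sring[of n c] unfolding Sring_def by (simp add: poly_in_mult poly_in_power)

lemma inj_i0:
  fixes f :: "(nat,'k::field_char_0) mpoly"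
  assumes sc: "simplicial_complex n \<Delta>" and pu: "pure_of_dim 2 \<Delta>"
    and cnz: "\<forall>v\<in>{1..n}. c v \<noteq> 0" and j: "j \<le> 3"
    and fS: "f \<in> Sring n" and hf: "homog 0 f" and fI: "lin_form n c ^ j * f \<in> AD_ideal n \<Delta>"
  shows "f \<in> AD_ideal n \<Delta>"
proof -
  have z: "\<forall>\<tau>\<in>\<Delta>. sqc (lin_form n c ^ j * f) \<tau> = 0"
    using AD_iff[OF sc Lpow_Sring[OF fS]] fI by blast
  obtain \<tau> where t: "\<tau> \<in> \<Delta>" "card \<tau> = j" using exists_face_card[OF sc pu j] by blast
  have tf: "finite \<tau>" and ts: "\<tau> \<subseteq> {1..n}" using sc_fin[OF sc t(1)] sc_sub[OF sc t(1)] by auto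
  have "sqc (lin_form n c ^ j * f) \<tau> = fact j * cprod c \<tau> * (sqc f {} / cprod c {})"
    using Lpow_homog[OF cnz hf tf ts, of j] t(2) card0_subsets[OF tf] by simp
  then have "fact j * cprod c \<tau> * sqc f {} = 0" using z t(1) by (simp add: cprod_def)
  then have f0: "sqc f {} = 0" using cprod_nz[OF cnz tf ts] by simp
  have "\<forall>\<sigma>\<in>\<Delta>. sqc f \<sigma> = 0"
  proof
    fix \<sigma> assume s: "\<sigma> \<in> \<Delta>"
    have sf: "finite \<sigma>" using sc_fin[OF sc s] .
    show "sqc f \<sigma> = 0"
    proof (cases "\<sigma> = {}")
      case True
      then show ?thesis using f0 by simp
    next
      case False
      then have c0: "card \<sigma> \<noteq> 0" using sf by simp
      show ?thesis
      proof (rule ccontr)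
        assume "sqc f \<sigma> \<noteq> 0"
        then have "card \<sigma> = 0" by (rule homog_sqc[OF hf sf])
        then show False using c0 by simp
      qed
    qed
  qed
  then show ?thesis using AD_iff[OF sc fS] by blast
qed

lemma inj_11:
  fixes f :: "(nat,'k::field_char_0) mpoly"
  assumes sc: "simplicial_complex n \<Delta>" and pu: "pure_of_dim 2 \<Delta>"
    and cnz: "\<forall>v\<in>{1..n}. c v \<noteq> 0"
    and fS: "f \<in> Sring n" and hf: "homog 1 f" and fI: "lin_form n c ^ 1 * f \<in> AD_ideal n \<Delta>"
  shows "f \<in> AD_ideal n \<Delta>"
proof -
  have z: "\<forall>\<tau>\<in>\<Delta>. sqc (lin_form n c ^ 1 * f) \<tau> = 0"
    using AD_iff[OF sc Lpow_Sring[OF fS]] fI by blast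
  define \<phi> where "\<phi> \<sigma> = sqc f \<sigma> / cprod c \<sigma>" for \<sigma>
  have edge: "\<phi> {x} + \<phi> {y} = 0" if e: "{x, y} \<in> \<Delta>" "x \<noteq> y" for x y
  proof -
    have tf: "finite {x, y}" by simp
    have ts: "{x, y} \<subseteq> {1..n}" using sc_sub[OF sc e(1)] .
    have "sqc (lin_form n c ^ 1 * f) {x, y} = fact 1 * cprod c {x, y} * (\<phi> {x} + \<phi> {y})"
      using Lpow_homog[OF cnz hf tf ts, of 1] e(2) card1_subsets2[OF e(2)] by (simp add: \<phi>_def)
    then have "cprod c {x, y} * (\<phi> {x} + \<phi> {y}) = 0" using z e(1) by simp
    then show ?thesis using cprod_nz[OF cnz tf ts] by simp
  qed
  have "\<forall>\<sigma>\<in>\<Delta>. sqc f \<sigma> = 0"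
  proof
    fix \<sigma> assume s: "\<sigma> \<in> \<Delta>"
    have sf: "finite \<sigma>" using sc_fin[OF sc s] .
    show "sqc f \<sigma> = 0"
    proof (cases "card \<sigma> = 1")
      case False
      show ?thesis
      proof (rule ccontr)
        assume "sqc f \<sigma> \<noteq> 0"
        then have "card \<sigma> = 1" by (rule homog_sqc[OF hf sf])
        then show False using False by simp
      qed
    next
      case True
      then obtain v where v: "\<sigma> = {v}" using card_1_singleton_iff by (metis One_nat_def)
      obtain F where F: "F \<in> facets \<Delta>" "\<sigma> \<subseteq> F" using in_facet[OF sc s] by blast
      have FD: "F \<in> \<Delta>" using facet_in[OF F(1)] .
      have Ff: "finite F" using sc_fin[OF sc FD] .
      have vF: "v \<in> F" using F(2) v by simp
      have "card (F - {v}) = 2" using facet_card[OF pu F(1)] vF Ff by simp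
      then obtain u w where uw: "F - {v} = {u, w}" "u \<noteq> w" by (auto simp: card_2_iff)
      have uv: "u \<noteq> v" "w \<noteq> v" using uw(1) by auto
      have Fe: "F = {v, u, w}" using uw(1) vF by auto
      have e1: "{v, u} \<in> \<Delta>" by (rule sc_down[OF sc FD]) (auto simp: Fe)
      have e2: "{v, w} \<in> \<Delta>" by (rule sc_down[OF sc FD]) (auto simp: Fe)
      have e3: "{u, w} \<in> \<Delta>" by (rule sc_down[OF sc FD]) (auto simp: Fe)
      have a1: "\<phi> {v} + \<phi> {u} = 0" using edge[OF e1] uv by auto
      have a2: "\<phi> {v} + \<phi> {w} = 0" using edge[OF e2] uv by auto
      have a3: "\<phi> {u} + \<phi> {w} = 0" using edge[OF e3] uw(2) by auto
      have "2 * \<phi> {v} = (\<phi> {v} + \<phi> {u}) + (\<phi> {v} + \<phi> {w}) - (\<phi> {u} + \<phi> {w})"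
        by (simp add: algebra_simps)
      then have "2 * \<phi> {v} = 0" unfolding a1 a2 a3 by simp
      then have "\<phi> {v} = 0" by simp
      moreover have "v \<in> {1..n}" using sc_sub[OF sc s] v by simp
      ultimately show ?thesis using v cnz by (simp add: \<phi>_def cprod_def)
    qed
  qed
  then show ?thesis using AD_iff[OF sc fS] by blast
qed



lemma surj12:
  fixes g :: "(nat,'k::field_char_0) mpoly"
  assumes sc: "simplicial_complex n \<Delta>" and pu: "pure_of_dim 2 \<Delta>"
    and lt: "facet_ideal_linear_type TYPE('k) n \<Delta>"
    and cnz: "\<forall>v\<in>{1..n}. c v \<noteq> 0"
    and gS: "g \<in> Sring n" and hg: "homog 3 g"
  shows "\<exists>f. f \<in> Sring n \<and> homog 1 f \<and> g - lin_form n c ^ 2 * f \<in> AD_ideal n \<Delta>"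
proof -
  define X where "X = {x\<in>\<Delta>. card x = 1}"
  define Y where "Y = {y\<in>\<Delta>. card y = 3}"
  define W :: "nat set \<Rightarrow> nat set \<Rightarrow> 'k" where "W y x = (if x \<subseteq> y then 1 else 0)" for y x
  have finX: "finite X" unfolding X_def using sc_finD[OF sc] by simp
  have finY: "finite Y" unfolding Y_def using sc_finD[OF sc] by simp
  have Wrat: "\<forall>y\<in>Y. \<forall>x\<in>X. W y x \<in> \<rat>" by (simp add: W_def)
  have "(\<forall>\<psi>. \<exists>\<phi>. \<forall>y\<in>Y. (\<Sum>x\<in>X. W y x * \<phi> x) = \<psi> y) \<or>
    (\<exists>b. (\<forall>y\<in>Y. b y \<in> \<rat>) \<and> (\<exists>y\<in>Y. b y \<noteq> 0) \<and> (\<forall>x\<in>X. (\<Sum>y\<in>Y. b y * W y x) = 0))"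
    by (rule LA_elim[OF finX finY Wrat])
  moreover have "\<not> (\<exists>b. (\<forall>y\<in>Y. b y \<in> \<rat>) \<and> (\<exists>y\<in>Y. b y \<noteq> 0) \<and> (\<forall>x\<in>X. (\<Sum>y\<in>Y. b y * W y x) = 0))"
  proof
    assume "\<exists>b. (\<forall>y\<in>Y. b y \<in> \<rat>) \<and> (\<exists>y\<in>Y. b y \<noteq> 0) \<and> (\<forall>x\<in>X. (\<Sum>y\<in>Y. b y * W y x) = 0)"
    then obtain b where b: "\<forall>y\<in>Y. b y \<in> \<rat>" "\<exists>y\<in>Y. b y \<noteq> 0" "\<forall>x\<in>X. (\<Sum>y\<in>Y. b y * W y x) = 0"
      by blast
    have vb: "\<forall>v\<in>{1..n}. (\<Sum>y\<in>{\<tau>\<in>\<Delta>. card \<tau> = 3}. b y * (if {v} \<subseteq> y then 1 else 0)) = 0"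
    proof
      fix v assume v: "v \<in> {1..n}"
      have "{v} \<in> X" unfolding X_def using sc_vertex[OF sc v] by simp
      then have "(\<Sum>y\<in>Y. b y * W y {v}) = 0" using b(3) by blast
      then show "(\<Sum>y\<in>{\<tau>\<in>\<Delta>. card \<tau> = 3}. b y * (if {v} \<subseteq> y then 1 else 0)) = 0"
        by (simp only: Y_def W_def)
    qed
    show False
      by (rule rat_balance_False[OF sc pu lt, of b]) (use b vb in \<open>simp_all add: Y_def\<close>)
  qed
  ultimately have L: "\<forall>\<psi>. \<exists>\<phi>. \<forall>y\<in>Y. (\<Sum>x\<in>X. W y x * \<phi> x) = \<psi> y" by blast
  define \<psi> where "\<psi> y = sqc g y / (2 * cprod c y)" for y
  obtain \<phi> where \<phi>: "\<forall>y\<in>Y. (\<Sum>x\<in>X. W y x * \<phi> x) = \<psi> y" using L by blast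
  define f where "f = mkpoly X (\<lambda>\<sigma>. cprod c \<sigma> * \<phi> \<sigma>)"
  have Xsub: "x \<subseteq> {1..n}" if "x \<in> X" for x using sc_sub[OF sc] that by (simp add: X_def)
  have Xfin: "finite x" if "x \<in> X" for x using sc_fin[OF sc] that by (simp add: X_def)
  have fS: "f \<in> Sring n" unfolding f_def by (rule mkpoly_Sring) (rule Xsub)
  have hf: "homog 1 f" unfolding f_def
  proof (rule mkpoly_homog)
    fix \<sigma> assume s: "\<sigma> \<in> X"
    have "card \<sigma> = 1" using s by (simp add: X_def)
    then show "finite \<sigma> \<and> card \<sigma> = 1" using Xfin[OF s] by simp
  qed
  have "\<forall>\<tau>\<in>\<Delta>. sqc (g - lin_form n c ^ 2 * f) \<tau> = 0"
  proof
    fix \<tau> assume t: "\<tau> \<in> \<Delta>"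
    have tf: "finite \<tau>" and ts: "\<tau> \<subseteq> {1..n}" using sc_fin[OF sc t] sc_sub[OF sc t] by auto
    have LP: "sqc (lin_form n c ^ 2 * f) \<tau> = (if card \<tau> = 1 + 2 then fact 2 * cprod c \<tau> *
       (\<Sum>\<sigma>\<in>{\<sigma>. \<sigma> \<subseteq> \<tau> \<and> card \<sigma> = 1}. sqc f \<sigma> / cprod c \<sigma>) else 0)"
      by (rule Lpow_homog[OF cnz hf tf ts])
    show "sqc (g - lin_form n c ^ 2 * f) \<tau> = 0"
    proof (cases "card \<tau> = 3")
      case False
      have "sqc g \<tau> = 0"
      proof (rule ccontr)
        assume "sqc g \<tau> \<noteq> 0"
        then have "card \<tau> = 3" by (rule homog_sqc[OF hg tf])
        then show False using False by simp
      qed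
      then show ?thesis using LP False by (simp add: sqc_diff)
    next
      case True
      have tY: "\<tau> \<in> Y" using t True by (simp add: Y_def)
      have sets: "{\<sigma>. \<sigma> \<subseteq> \<tau> \<and> card \<sigma> = 1} = {x\<in>X. x \<subseteq> \<tau>}"
        using sc_down[OF sc t] by (auto simp: X_def)
      have "(\<Sum>\<sigma>\<in>{\<sigma>. \<sigma> \<subseteq> \<tau> \<and> card \<sigma> = 1}. sqc f \<sigma> / cprod c \<sigma>) = (\<Sum>x\<in>{x\<in>X. x \<subseteq> \<tau>}. \<phi> x)"
        unfolding sets
      proof (rule sum.cong[OF refl])
        fix x assume x: "x \<in> {x\<in>X. x \<subseteq> \<tau>}"
        then have "sqc f x = cprod c x * \<phi> x"
          unfolding f_def using mkpoly_sqc[OF finX, of x] Xfin by auto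
        moreover have "cprod c x \<noteq> 0" using cprod_nz[OF cnz] x Xfin Xsub by blast
        ultimately show "sqc f x / cprod c x = \<phi> x" by simp
      qed
      also have "\<dots> = (\<Sum>x\<in>X. W \<tau> x * \<phi> x)"
      proof -
        have "(\<Sum>x\<in>X. W \<tau> x * \<phi> x) = (\<Sum>x\<in>X. if x \<subseteq> \<tau> then \<phi> x else 0)"
          by (rule sum.cong) (auto simp: W_def)
        also have "\<dots> = (\<Sum>x\<in>{x\<in>X. x \<subseteq> \<tau>}. \<phi> x)" by (rule sum.inter_filter[OF finX, symmetric])
        finally show ?thesis by simp
      qed
      also have "\<dots> = \<psi> \<tau>" using \<phi> tY by blast
      finally have "sqc (lin_form n c ^ 2 * f) \<tau> = 2 * cprod c \<tau> * \<psi> \<tau>"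
        using LP True by simp
      also have "\<dots> = sqc g \<tau>" using cprod_nz[OF cnz tf ts] by (simp add: \<psi>_def)
      finally show ?thesis by (simp add: sqc_diff)
    qed
  qed
  moreover have "g - lin_form n c ^ 2 * f \<in> Sring n"
    using gS Lpow_Sring[OF fS, of c 2] unfolding Sring_def by (simp add: poly_in_diff)
  ultimately have "g - lin_form n c ^ 2 * f \<in> AD_ideal n \<Delta>"
    using AD_iff[OF sc] by blast
  then show ?thesis using fS hf by blast
qed



lemma rank_cases:
  fixes c :: "nat \<Rightarrow> 'k::field_char_0"
  assumes sc: "simplicial_complex n \<Delta>" and pu: "pure_of_dim 2 \<Delta>"
    and lt: "facet_ideal_linear_type TYPE('k) n \<Delta>"
    and cnz: "\<forall>v\<in>{1..n}. c v \<noteq> 0"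
  shows "mult_full_rank n (AD_ideal n \<Delta> :: (nat,'k) mpoly set) (lin_form n c) i j"
proof -
  let ?L = "lin_form n c :: (nat,'k) mpoly"
  let ?I = "AD_ideal n \<Delta> :: (nat,'k) mpoly set"
  have I0: "0 \<in> ?I" unfolding AD_ideal_def by (rule ideal_0)
  consider (j0) "j = 0" | (big) "j \<noteq> 0" "4 \<le> i + j" | (i0) "i = 0" "j \<noteq> 0" "j \<le> 3"
    | (i1j1) "i = 1" "j = 1" | (i1j2) "i = 1" "j = 2" | (i2j1) "i = 2" "j = 1"
    by linarith
  then show ?thesis
  proof cases
    case j0
    show ?thesis unfolding mult_full_rank_def
    proof (rule disjI2, intro allI impI)
      fix g :: "(nat,'k) mpoly" assume "g \<in> Sring n \<and> homog (i + j) g"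
      then show "\<exists>f. f \<in> Sring n \<and> homog i f \<and> g - ?L ^ j * f \<in> ?I"
        using j0 I0 by (intro exI[of _ g]) simp
    qed
  next
    case big
    show ?thesis unfolding mult_full_rank_def
    proof (rule disjI2, intro allI impI)
      fix g :: "(nat,'k) mpoly" assume g: "g \<in> Sring n \<and> homog (i + j) g"
      have "\<forall>\<sigma>\<in>\<Delta>. sqc g \<sigma> = 0"
      proof
        fix \<sigma> assume s: "\<sigma> \<in> \<Delta>"
        show "sqc g \<sigma> = 0"
        proof (rule ccontr)
          assume "sqc g \<sigma> \<noteq> 0"
          then have "card \<sigma> = i + j" using homog_sqc[OF _ sc_fin[OF sc s]] g by blast
          then show False using face_card_le[OF sc pu s] big by simp
        qed
      qed
      then have "g \<in> ?I" using AD_iff[OF sc] g by blast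
      moreover have "(0 :: (nat,'k) mpoly) \<in> Sring n" by (rule Sring_0)
      ultimately show "\<exists>f. f \<in> Sring n \<and> homog i f \<and> g - ?L ^ j * f \<in> ?I"
        by (intro exI[of _ 0]) (simp add: homog_zero)
    qed
  next
    case i0
    show ?thesis unfolding mult_full_rank_def
    proof (rule disjI1, intro allI impI)
      fix f :: "(nat,'k) mpoly" assume f: "f \<in> Sring n \<and> homog i f \<and> ?L ^ j * f \<in> ?I"
      then show "f \<in> ?I" using inj_i0[OF sc pu cnz i0(3)] i0(1) by blast
    qed
  next
    case i1j1
    show ?thesis unfolding mult_full_rank_def
    proof (rule disjI1, intro allI impI)
      fix f :: "(nat,'k) mpoly" assume f: "f \<in> Sring n \<and> homog i f \<and> ?L ^ j * f \<in> ?I"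
      then show "f \<in> ?I" using inj_11[OF sc pu cnz] i1j1 by blast
    qed
  next
    case i1j2
    show ?thesis unfolding mult_full_rank_def
    proof (rule disjI2, intro allI impI)
      fix g :: "(nat,'k) mpoly" assume g: "g \<in> Sring n \<and> homog (i + j) g"
      then have "g \<in> Sring n" "homog 3 g" using i1j2 by (auto simp: numeral_3_eq_3)
      then have "\<exists>f. f \<in> Sring n \<and> homog 1 f \<and> g - ?L ^ 2 * f \<in> ?I"
        by (rule surj12[OF sc pu lt cnz])
      then show "\<exists>f. f \<in> Sring n \<and> homog i f \<and> g - ?L ^ j * f \<in> ?I"
        using i1j2 by simp
    qed
  next
    case i2j1
    show ?thesis unfolding mult_full_rank_def
    proof (rule disjI2, intro allI impI)
      fix g :: "(nat,'k) mpoly" assume g: "g \<in> Sring n \<and> homog (i + j) g"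
      then have "g \<in> Sring n" "homog 3 g" using i2j1 by auto
      then obtain f where f: "f \<in> Sring n" "homog 1 f" "g - ?L ^ 2 * f \<in> ?I"
        using surj12[OF sc pu lt cnz] by blast
      have "?L * f \<in> Sring n" using lin_form_Sring[of n c] f(1) unfolding Sring_def by (simp add: poly_in_mult)
      moreover have "homog 2 (?L * f)" using homog_mult[OF homog_lin_form f(2)] by (simp add: numeral_2_eq_2)
      moreover have eqL: "g - ?L ^ 1 * (?L * f) = g - ?L ^ 2 * f" by (simp add: power2_eq_square mult.assoc)
      have "g - ?L ^ j * (?L * f) \<in> ?I" unfolding i2j1(2) eqL by (rule f(3))
      ultimately show "\<exists>f. f \<in> Sring n \<and> homog i f \<and> g - ?L ^ j * f \<in> ?I"
        unfolding i2j1(1) by blast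
    qed
  qed
qed

theorem corollary4p2:
  fixes n :: nat and \<Delta> :: "nat set set"
  assumes "simplicial_complex n \<Delta>"
    and "pure_of_dim 2 \<Delta>"
    and "facet_ideal_linear_type TYPE('k::field_char_0) n \<Delta>"
  shows "strong_lefschetz n (AD_ideal n \<Delta> :: (nat, 'k) mpoly set)"
proof -
  note sc = assms(1) and pu = assms(2) and lt = assms(3)
  define P :: "(nat,'k) mpoly" where "P = sqfree_mon {1..n}"
  have Peq: "P = sg (ind {1..n}) 1" by (simp add: P_def sqfree_mon_eq)
  have PS: "P \<in> Sring n" unfolding Peq Sring_def by (intro CollectI poly_in_single) (simp add: keys_ind)
  have Pnz: "P \<noteq> 0"
  proof
    assume "P = 0"
    then have "lk P (ind {1..n}) = 0" by simp
    then show False by (simp add: Peq)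
  qed
  have Pev: "peval (\<lambda>a. a) c P = (\<Prod>v\<in>{1..n}. c v)" for c :: "nat \<Rightarrow> 'k"
    by (simp add: Peq peval_def keys_ind lookup_ind)
  show ?thesis unfolding strong_lefschetz_def
  proof (intro exI[of _ P] conjI allI impI)
    show "P \<in> Sring n" by (rule PS)
    show "P \<noteq> 0" by (rule Pnz)
    fix c :: "nat \<Rightarrow> 'k" and i j assume "peval (\<lambda>a. a) c P \<noteq> 0"
    then have cnz: "\<forall>v\<in>{1..n}. c v \<noteq> 0" by (simp add: Pev prod_zero_iff)
    show "mult_full_rank n (AD_ideal n \<Delta>) (lin_form n c) i j"
      by (rule rank_cases[OF sc pu lt cnz])
  qed
qed


end
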